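(* With $Y=\min\{a_2g_{sr},g_{rd}\}$ and $\bar C_{s_2,\mathrm{SC}}(\rho)=\tfrac12\mathbb E[\log_2(1+\rho Y)]$, \begin{align*} \lim_{\rho\to\infty}\Big[\bar C_{s_2,\mathrm{SC}}(\rho)-\tfrac12\log_2\rho\Big]=\frac{1}{2\ln2}&\sum_{\substack{k_0+\cdots+k_{m_{sr}}=N_r\\ k_0\neq N_r}}\ \sum_{\substack{q_0+\cdots+q_{m_{rd}}=N_d\\ q_0\neq N_d}}\binom{N_r}{k_0,\ldots,k_{m_{sr}}}\binom{N_d}{q_0,\ldots,q_{m_{rd}}}(-1)^{N_r+N_d-k_0-q_0}\\ &\times\Big[\prod_{\mu=0}^{m_{sr}-1}\Big(\tfrac{1}{\mu!}\Big)^{k_{\mu+1}}\Big]\Big(\tfrac{m_{sr}}{a_2\Omega_{sr}}\Big)^{\tau}\Big[\prod_{\varepsilon=0}^{m_{rd}-1}\Big(\tfrac{1}{\varepsilon!}\Big)^{q_{\varepsilon+1}}\Big]\Big(\tfrac{m_{rd}}{\Omega_{rd}}\Big)^{\upsilon}\frac{1}{\alpha_{k_0,q_0}^{\tau+\upsilon}}\\ &\times\Big[\Gamma(\tau+\upsilon+1)\{\psi(\tau+\upsilon+1)-\ln\alpha_{k_0,q_0}\}-(\tau+\upsilon)\Gamma(\tau+\upsilon)\{\psi(\tau+\upsilon)-\ln\alpha_{k_0,q_0}\}\Big], \end{align*} where the second term in the last bracket is taken to be $0$ when $\tau+\upsilon=0$. In particular, $\bar C_{s_1,\mathrm{SC}}+\bar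 C_{s_2,\mathrm{SC}}=\tfrac12\log_2\rho+O(1)$ as $\rho\to\infty$, where $\bar C_{s_1,\mathrm{SC}}=\tfrac12\mathbb E[\log_2(1+\frac{a_1\rho X}{a_2\rho X+1})]$ with $X=\min\{g_{sr},g_{sd}\}$.
   Context: Let $N_r,N_d$ be positive integers, $m_{sr},m_{sd},m_{rd}$ positive integers, and $\Omega_{sr},\Omega_{sd},\Omega_{rd}>0$. Let $\{G_{sr,i}\}_{i=1}^{N_r}$, $\{G_{sd,j}\}_{j=1}^{N_d}$, $\{G_{rd,k}\}_{k=1}^{N_d}$ be mutually independent random variables, where each $G_{sr,i}$ has the Gamma density $\frac{(m_{sr}/\Omega_{sr})^{m_{sr}}x^{m_{sr}-1}}{\Gamma(m_{sr})}e^{-m_{sr}x/\Omega_{sr}}$, $x>0$, and analogously $G_{sd,j}$ with $(m_{sd},\Omega_{sd})$ and $G_{rd,k}$ with $(m_{rd},\Omega_{rd})$. SC gains: $g_{sr}=\max_i G_{sr,i}$, $g_{sd}=\max_j G_{sd,j}$, $g_{rd}=\max_k G_{rd,k}$. Let $a_1,a_2\in(0,1)$ with $a_1+a_2=1$, $a_1>a_2$. Sums over $k_0+\cdots+k_m=N$, $k_0\ne N$ run over nonnegative integer tuples; $\binom{N}{k_0,\ldots,k_m}$ is the multinomial coefficient; $\tau=\sum_{\mu=0}^{m_{sr}-1}\mu k_{\mu+1}$, $\upsilon=\sum_{\varepsilon=0}^{m_{rd}-1}\varepsilon q_{\varepsilon+1}$, $\alpha_{k_0,q_0}=\frac{(N_r-k_0)m_{sr}}{a_2\Omega_{sr}}+\frac{(N_d-q_0)m_{rd}}{\Omega_{rd}}$;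 $\psi$ is the digamma function. *)

theory Defs
  imports "HOL-Probability.Probability" "HOL-Library.Landau_Symbols"
begin

definition gamma_pdf :: "nat \<Rightarrow> real \<Rightarrow> real \<Rightarrow> real" where
  "gamma_pdf m \<Omega> x = (if x > 0 then
     (real m / \<Omega>) ^ m * x ^ (m - 1) / Gamma (real m) * exp (- real m * x / \<Omega>) else 0)"

definition tuples :: "nat \<Rightarrow> nat \<Rightarrow> (nat \<Rightarrow> nat) set" where
  "tuples N m = {k. (\<forall>i>m. k i = 0) \<and> (\<Sum>i\<le>m. k i) = N \<and> k 0 \<noteq> N}"

definition multinom :: "nat \<Rightarrow> nat \<Rightarrow> (nat \<Rightarrow> nat) \<Rightarrow> real" where
  "multinom N m k = fact N / (\<Prod>i\<le>m. fact (k i))"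

definition wsum :: "nat \<Rightarrow> (nat \<Rightarrow> nat) \<Rightarrow> nat" where
  "wsum m k = (\<Sum>\<mu><m. \<mu> * k (\<mu> + 1))"

definition limit_const ::
  "nat \<Rightarrow> nat \<Rightarrow> nat \<Rightarrow> nat \<Rightarrow> real \<Rightarrow> real \<Rightarrow> real \<Rightarrow> real" where
  "limit_const Nr Nd msr mrd \<Omega>sr \<Omega>rd a2 =
    1 / (2 * ln 2) *
    (\<Sum>k\<in>tuples Nr msr. \<Sum>q\<in>tuples Nd mrd.
      (let \<tau> = wsum msr k; \<upsilon> = wsum mrd q;
           \<alpha> = (real Nr - real (k 0)) * real msr / (a2 * \<Omega>sr)
               + (real Nd - real (q 0)) * real mrd / \<Omega>rd;
           s = \<tau> + \<upsilon> in
       multinom Nr msr k * multinom Nd mrd q * (-1) ^ (Nr - k 0 + (Nd - q 0))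
       * (\<Prod>\<mu><msr. (1 / fact \<mu>) ^ k (\<mu> + 1)) * (real msr / (a2 * \<Omega>sr)) ^ \<tau>
       * (\<Prod>\<epsilon><mrd. (1 / fact \<epsilon>) ^ q (\<epsilon> + 1)) * (real mrd / \<Omega>rd) ^ \<upsilon>
       * (1 / \<alpha> ^ s)
       * (Gamma (real s + 1) * (Digamma (real s + 1) - ln \<alpha>)
          - (if s = 0 then 0 else real s * Gamma (real s) * (Digamma (real s) - ln \<alpha>)))))"

end

theory Submission
  imports Defs
begin


definition Fsm :: "nat \<Rightarrow> real \<Rightarrow> real \<Rightarrow> real" where
  "Fsm k l x = 1 - (\<Sum>n\<le>k. (l*x)^n * exp (- l * x) / fact n)"
definition dsm :: "nat \<Rightarrow> real \<Rightarrow> real \<Rightarrow> real" where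
  "dsm k l x = l^(Suc k) * x^k * exp (- l * x) / fact k"

lemma DERIV_Fsm: "DERIV (Fsm k l) x :> dsm k l x"
proof (induction k)
  case 0 show ?case unfolding Fsm_def dsm_def by (auto intro!: derivative_eq_intros)
next
  case (Suc k)
  have eq: "Fsm (Suc k) l = (\<lambda>x. Fsm k l x - (l*x)^Suc k * exp(-l*x)/fact (Suc k))"
    by (auto simp: Fsm_def fun_eq_iff)
  have "DERIV (\<lambda>x. Fsm k l x - (l*x)^Suc k * exp(-l*x)/fact (Suc k)) x :>
     dsm k l x - (real (Suc k) * (l*x)^k * l * exp(-l*x) + (l*x)^Suc k * (exp(-l*x) * (-l))) / fact (Suc k)"
    by (rule DERIV_diff[OF Suc]) (auto intro!: derivative_eq_intros, cases k, auto simp: algebra_simps)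
  also have "dsm k l x - (real (Suc k) * (l*x)^k * l * exp(-l*x) + (l*x)^Suc k * (exp(-l*x) * (-l))) / fact (Suc k)
     = dsm (Suc k) l x"
    unfolding dsm_def by (simp add: field_simps power_mult_distrib del: fact_Suc) (simp add: field_simps)
  finally show ?case unfolding eq .
qed

lemma Fsm_0[simp]: "Fsm k l 0 = 0"
  unfolding Fsm_def by (simp add: power_0_left sum.atMost_shift del: sum.atMost_Suc)

lemma Fsm_le1: "0 \<le> l \<Longrightarrow> 0 \<le> x \<Longrightarrow> Fsm k l x \<le> 1"
  unfolding Fsm_def by (auto intro!: sum_nonneg)

lemma Fsm_ge0: "0 < l \<Longrightarrow> 0 \<le> x \<Longrightarrow> 0 \<le> Fsm k l x"
  using erlang_CDF_nonneg[of l k x] by (simp add: erlang_CDF_def Fsm_def)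

lemma dsm_ge0: "0 \<le> l \<Longrightarrow> 0 \<le> x \<Longrightarrow> 0 \<le> dsm k l x"
  unfolding dsm_def by auto

lemma Fsm_erlang: "0 \<le> x \<Longrightarrow> erlang_CDF k l x = Fsm k l x"
  by (simp add: erlang_CDF_def Fsm_def)


lemma int_pe: "0 < a \<Longrightarrow> integrable lborel (\<lambda>x::real. indicator {0..} x * x^p * exp (- a * x))"
proof -
  assume a: "0 < a"
  have e: "(\<integral>\<^sup>+x. ennreal (erlang_density 0 a x * x^p) \<partial>lborel) = ennreal (fact p/(fact 0 * a^p))"
    using nn_integral_erlang_ith_moment[OF a, of 0 p] by simp
  have "has_bochner_integral lborel (\<lambda>x. erlang_density 0 a x * x^p) (fact p / (fact 0 * a^p))"
    using a by (intro has_bochner_integral_nn_integral e) (auto simp: erlang_density_def)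
  then have "integrable lborel (\<lambda>x. erlang_density 0 a x * x^p / a)"
    by (rule integrable_divide[OF integrable.intros])
  moreover have "(\<lambda>x. erlang_density 0 a x * x^p / a) = (\<lambda>x. indicator {0..} x * x^p * exp (- a * x))"
    using a by (auto simp: fun_eq_iff erlang_density_def indicator_def)
  ultimately show ?thesis by simp
qed

lemma xlnx_tendsto: "((\<lambda>x::real. x * ln x) \<longlongrightarrow> 0) (at_right 0)"
proof (rule Lim_null_comparison)
  show "\<forall>\<^sub>F x in at_right 0. norm (x * ln x) \<le> 2 * sqrt x"
  proof -
    have "eventually (\<lambda>x::real. 0 < x \<and> x < 1) (at_right 0)"
      by (auto simp: eventually_at_right_field intro!: exI[of _ 1])
    then show ?thesis
    proof (rule eventually_mono)
      fix x :: real assume x: "0 < x \<and> x < 1"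
      have "ln (1 / sqrt x) \<le> 1 / sqrt x - 1" using x by (intro ln_le_minus_one) auto
      moreover have "ln (1 / sqrt x) = - ln x / 2" using x by (simp add: ln_div ln_sqrt)
      ultimately have "- ln x \<le> 2 / sqrt x" by (simp add: field_simps)
      moreover have "ln x \<le> 0" using x by simp
      ultimately have "norm (x * ln x) = x * (- ln x)"
        using x by (simp add: abs_mult)
      also have "\<dots> \<le> x * (2 / sqrt x)"
        using x \<open>- ln x \<le> 2 / sqrt x\<close> by (intro mult_left_mono) auto
      also have "x * (2 / sqrt x) = 2 * sqrt x" using x
        by (simp add: field_simps)
      finally show "norm (x * ln x) \<le> 2 * sqrt x" .
    qed
  qed
  show "((\<lambda>x. 2 * sqrt x) \<longlongrightarrow> 0) (at_right (0::real))"
    by (rule tendsto_eq_intros) (auto intro!: tendsto_eq_intros)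
qed

lemma int_negln01: "set_integrable lborel {0<..<1} (\<lambda>x::real. - ln x)"
proof -
  have "set_integrable lborel (einterval 0 1) (\<lambda>x::real. - ln x)"
  proof (rule interval_integral_FTC_nonneg[where F="\<lambda>x. x - x * ln x" and A=0 and B=1])
    show "((\<lambda>x. x - x * ln x) has_real_derivative - ln x) (at x)" if "0 < ereal x" for x
      using that by (auto intro!: derivative_eq_intros)
    show "isCont (\<lambda>x. - ln x) x" if "0 < ereal x" for x
      using that by (auto intro!: continuous_intros)
    show "AE x in lborel. 0 < ereal x \<longrightarrow> ereal x < 1 \<longrightarrow> 0 \<le> - ln x"
      by auto
    have "((\<lambda>x. x - x * ln x) \<longlongrightarrow> 0 - 0) (at_right (0::real))"
      by (intro tendsto_diff xlnx_tendsto) (auto intro: tendsto_ident_at)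
    then show "(((\<lambda>x. x - x * ln x) \<circ> real_of_ereal) \<longlongrightarrow> 0) (at_right 0)"
      unfolding zero_ereal_def ereal_tendsto_simps by simp
    show "(((\<lambda>x. x - x * ln x) \<circ> real_of_ereal) \<longlongrightarrow> 1) (at_left 1)"
      by (auto simp: one_ereal_def ereal_tendsto_simps intro!: tendsto_eq_intros)
  qed auto
  moreover have "einterval 0 1 = {0<..<(1::real)}"
    by (auto simp: einterval_def zero_ereal_def one_ereal_def)
  ultimately show ?thesis by simp
qed


lemma pe_ln_bound:
  fixes x a :: real and p :: nat
  assumes a: "0 < a"
  shows "\<bar>indicator {0..} x * x^p * exp (- a * x) * ln x\<bar>
     \<le> indicator {0<..<1} x * (- ln x) + indicator {0..} x * x^(Suc p) * exp (- a * x)"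
proof (cases "x \<le> 0")
  case True
  then have "indicator {0..} x * x^p * exp (- a * x) * ln x = 0"
    by (cases "x = 0") (auto simp: indicator_def)
  moreover have "0 \<le> indicator {0..} x * x^(Suc p) * exp (- a * x)"
    using True by (auto simp: indicator_def)
  moreover have "indicator {0<..<1} x * (- ln x) = 0"
    using True by (auto simp: indicator_def)
  ultimately show ?thesis by (metis (no_types) abs_zero add.left_neutral)
next
  case False
  then have x: "0 < x" by simp
  have e1: "exp (- a * x) \<le> 1" using a x by simp
  show ?thesis
  proof (cases "x < 1")
    case True
    have "\<bar>indicator {0..} x * x^p * exp (- a * x) * ln x\<bar> = x^p * exp (- a * x) * (- ln x)"
      using x True by (simp add: abs_mult indicator_def)
    also have "\<dots> \<le> 1 * 1 * (- ln x)"
      using x True e1 by (intro mult_right_mono mult_mono power_le_one) auto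
    also have "\<dots> = indicator {0<..<1} x * (- ln x)"
      using x True by (simp add: indicator_def)
    finally have h: "\<bar>indicator {0..} x * x^p * exp (- a * x) * ln x\<bar> \<le> indicator {0<..<1} x * (- ln x)" .
    have "0 \<le> indicator {0..} x * x^(Suc p) * exp (- a * x)" using x by simp
    with h show ?thesis by linarith
  next
    case False
    have l: "0 \<le> ln x" "ln x \<le> x" using False x by (auto simp: ln_le_minus_one[of x] intro: order_trans[OF ln_le_minus_one])
    have "\<bar>indicator {0..} x * x^p * exp (- a * x) * ln x\<bar> = x^p * exp (- a * x) * ln x"
      using x l by (simp add: abs_mult indicator_def)
    also have "\<dots> \<le> x^p * exp (- a * x) * x"
      using x l by (intro mult_left_mono) auto
    also have "\<dots> = indicator {0..} x * x^(Suc p) * exp (- a * x)"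
      using x by (simp add: indicator_def)
    finally have h: "\<bar>indicator {0..} x * x^p * exp (- a * x) * ln x\<bar> \<le> indicator {0..} x * x^(Suc p) * exp (- a * x)" .
    have "indicator {0<..<1} x * (- ln x) = 0" using False by (simp add: indicator_def)
    with h show ?thesis by linarith
  qed
qed

lemma int_pe_ln: "0 < a \<Longrightarrow> integrable lborel (\<lambda>x::real. indicator {0..} x * x^p * exp (- a * x) * ln x)"
proof -
  assume a: "0 < a"
  let ?w = "\<lambda>x::real. indicator {0<..<1} x * (- ln x) + indicator {0..} x * x^(Suc p) * exp (- a * x)"
  have "integrable lborel ?w"
    using int_negln01 int_pe[OF a, of "Suc p"] by (auto simp: set_integrable_def intro!: integrable_add)
  then show ?thesis
  proof (rule Bochner_Integration.integrable_bound)
    show "(\<lambda>x::real. indicator {0..} x * x^p * exp (- a * x) * ln x) \<in> borel_measurable lborel"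
      by measurable
    show "AE x in lborel. norm (indicator {0..} x * x^p * exp (- a * x) * ln x) \<le> norm (?w x)"
      using pe_ln_bound[OF a] by (auto intro!: AE_I2 order_trans[OF _ abs_ge_self])
  qed
qed


lemma Gamma_bochner:
  assumes y: "0 < y"
  shows "has_bochner_integral lborel (\<lambda>t::real. indicator {0..} t * t powr (y - 1) / exp t) (Gamma y)"
proof (rule has_bochner_integral_nn_integral)
  show "(\<lambda>t::real. indicator {0..} t * t powr (y - 1) / exp t) \<in> borel_measurable lborel"
    by measurable
  show "AE x in lborel. 0 \<le> indicator {0..} x * x powr (y - 1) / exp x"
    by (auto simp: indicator_def)
  show "0 \<le> Gamma y" using y by (simp add: Gamma_real_pos less_imp_le)
  show "(\<integral>\<^sup>+ x. ennreal (indicator {0..} x * x powr (y - 1) / exp x) \<partial>lborel) = ennreal (Gamma y)"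
    using Gamma_conv_nn_integral_real[OF y] by simp
qed

lemma expm1_bound:
  fixes y :: real assumes "0 \<le> y" shows "exp y - 1 \<le> y * exp y"
proof -
  have "1 - y \<le> exp (- y)" using exp_ge_add_one_self[of "- y"] by simp
  then have "(1 - y) * exp y \<le> exp (- y) * exp y" by (intro mult_right_mono) auto
  then show ?thesis by (simp add: algebra_simps exp_minus)
qed

lemma powr_dq_bound:
  fixes t h :: real
  assumes h: "0 < h" "h \<le> 1"
  shows "\<bar>indicator {0..} t * ((t powr (1 + h - 1) - t powr (1 - 1)) / exp t) / h\<bar>
    \<le> indicator {0<..<1} t * (- ln t) + indicator {0..} t * t^2 * exp (- 1 * t)"
proof -
  consider "t \<le> 0" | "0 < t" "t < 1" | "1 \<le> t" by linarith
  then show ?thesis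
  proof cases
    case 1
    then have "indicator {0..} t * ((t powr (1 + h - 1) - t powr (1 - 1)) / exp t) / h = 0"
      by (cases "t = 0") (auto simp: indicator_def)
    moreover have "0 \<le> indicator {0..} t * t^2 * exp (- 1 * t)"
      by (auto simp: indicator_def)
    moreover have "indicator {0<..<1} t * (- ln t) = 0"
      using 1 by (auto simp: indicator_def)
    ultimately show ?thesis by (metis (no_types) abs_zero add.left_neutral)
  next
    case 2
    let ?y = "h * ln t"
    have yneg: "?y \<le> 0" using 2 h by (simp add: mult_nonneg_nonpos)
    have pw: "t powr (1 + h - 1) = exp ?y" "t powr (1 - 1) = 1"
      using 2 by (auto simp: powr_def)
    have a: "?y \<le> exp ?y - 1" using exp_ge_add_one_self[of ?y] by linarith
    have b: "exp ?y - 1 \<le> 0" using yneg by simp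
    have e: "indicator {0..} t * ((t powr (1 + h - 1) - t powr (1 - 1)) / exp t) / h = (exp ?y - 1) / h / exp t"
      using 2 by (simp add: powr_def indicator_def)
    have "\<bar>indicator {0..} t * ((t powr (1 + h - 1) - t powr (1 - 1)) / exp t) / h\<bar>
        = (1 - exp ?y) / h / exp t"
      unfolding e using h b by (simp add: abs_div abs_minus_commute)
    also have "\<dots> \<le> (- ?y) / h / exp t"
      using a h by (intro divide_right_mono) auto
    also have "\<dots> = (- ln t) / exp t" using h by simp
    also have "\<dots> \<le> (- ln t) / 1"
      using 2 by (intro divide_left_mono) (auto intro: order_trans[OF _ exp_ge_add_one_self])
    also have "\<dots> = - ln t" by simp
    finally have h1: "\<bar>indicator {0..} t * ((t powr (1 + h - 1) - t powr (1 - 1)) / exp t) / h\<bar>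
        \<le> indicator {0<..<1} t * (- ln t)" using 2 by (simp add: indicator_def)
    have "0 \<le> indicator {0..} t * t^2 * exp (- 1 * t)" by (auto simp: indicator_def)
    with h1 show ?thesis by linarith
  next
    case 3
    let ?y = "h * ln t"
    have ypos: "0 \<le> ?y" using 3 h by simp
    have pw: "t powr (1 + h - 1) = exp ?y" "t powr (1 - 1) = 1"
      using 3 by (auto simp: powr_def)
    have b: "0 \<le> exp ?y - 1" using ypos by simp
    have lt: "ln t \<le> t" using ln_le_minus_one[of t] 3 by linarith
    have ey: "exp ?y \<le> t"
    proof -
      have "exp ?y = t powr h" using 3 by (simp add: powr_def)
      also have "\<dots> \<le> t powr 1" using 3 h by (intro powr_mono) auto
      finally show ?thesis using 3 by simp
    qed
    have e: "indicator {0..} t * ((t powr (1 + h - 1) - t powr (1 - 1)) / exp t) / h = (exp ?y - 1) / h / exp t"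
      using 3 by (simp add: powr_def indicator_def)
    have "\<bar>indicator {0..} t * ((t powr (1 + h - 1) - t powr (1 - 1)) / exp t) / h\<bar>
        = (exp ?y - 1) / h / exp t"
      unfolding e using h b by simp
    also have "\<dots> \<le> (?y * exp ?y) / h / exp t"
      using expm1_bound[OF ypos] h by (intro divide_right_mono) auto
    also have "\<dots> = ln t * exp ?y / exp t" using h by simp
    also have "\<dots> \<le> t * t / exp t"
      using lt ey 3 by (intro divide_right_mono mult_mono) auto
    also have "\<dots> = indicator {0..} t * t^2 * exp (- 1 * t)"
      using 3 by (simp add: indicator_def exp_minus field_simps power2_eq_square)
    finally have h1: "\<bar>indicator {0..} t * ((t powr (1 + h - 1) - t powr (1 - 1)) / exp t) / h\<bar>
        \<le> indicator {0..} t * t^2 * exp (- 1 * t)" .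
    have "indicator {0<..<1} t * (- ln t) = 0" using 3 by (simp add: indicator_def)
    with h1 show ?thesis by linarith
  qed
qed

lemma hseq_at0: "filterlim (\<lambda>n. inverse (real (Suc n))) (at (0::real)) sequentially"
  by (rule filterlim_atI[OF LIMSEQ_inverse_real_of_nat]) auto

lemma I0:
  shows "integrable lborel (\<lambda>t::real. indicator {0..} t * exp (- t) * ln t)"
    and "(\<integral>t. indicator {0..} t * exp (- t) * ln (t::real) \<partial>lborel) = - euler_mascheroni"
proof -
  show "integrable lborel (\<lambda>t::real. indicator {0..} t * exp (- t) * ln t)"
    using int_pe_ln[of 1 0] by simp
  define h where "h n = inverse (real (Suc n))" for n
  have h: "0 < h n" "h n \<le> 1" for n by (auto simp: h_def inverse_le_1_iff)
  define s where "s n t = indicator {0..} t * ((t powr (1 + h n - 1) - t powr (1 - 1)) / exp t) / h n" for n and t :: real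
  define w where "w t = indicator {0<..<1} t * (- ln t) + indicator {0..} t * t^2 * exp (- 1 * t)" for t :: real
  have lim1: "(\<lambda>n. integral\<^sup>L lborel (s n)) \<longlonglongrightarrow> (\<integral>t. indicator {0..} t * exp (- t) * ln t \<partial>lborel)"
  proof (rule integral_dominated_convergence[where w=w])
    show "(\<lambda>t::real. indicator {0..} t * exp (- t) * ln t) \<in> borel_measurable lborel" by measurable
    show "s n \<in> borel_measurable lborel" for n unfolding s_def by measurable
    show "integrable lborel w"
      unfolding w_def using int_negln01 int_pe[of 1 2]
      by (auto simp: set_integrable_def intro!: integrable_add)
    show "AE x in lborel. norm (s n x) \<le> w x" for n
      unfolding s_def w_def using powr_dq_bound[OF h] by auto
    show "AE t in lborel. (\<lambda>n. s n t) \<longlonglongrightarrow> indicator {0..} t * exp (- t) * ln t"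
    proof (rule AE_I2)
      fix t :: real
      show "(\<lambda>n. s n t) \<longlonglongrightarrow> indicator {0..} t * exp (- t) * ln t"
      proof (cases "0 < t")
        case False
        then have e1: "(\<lambda>n. s n t) = (\<lambda>n. 0)" by (cases "t = 0") (auto simp: s_def indicator_def)
        have e2: "indicator {0..} t * exp (- t) * ln t = 0"
          using False by (cases "t = 0") (auto simp: indicator_def)
        show ?thesis unfolding e1 e2 by simp
      next
        case True
        have "((\<lambda>y. exp (y * ln t)) has_field_derivative exp (0 * ln t) * ln t) (at 0)"
          by (auto intro!: derivative_eq_intros)
        then have "((\<lambda>y. (exp (y * ln t) - exp (0 * ln t)) / (y - 0)) \<longlongrightarrow> ln t) (at 0)"
          unfolding has_field_derivative_iff by simp
        from filterlim_compose[OF this hseq_at0[folded h_def]]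
        have "(\<lambda>n. (exp (h n * ln t) - 1) / h n) \<longlonglongrightarrow> ln t" by simp
        then have "(\<lambda>n. indicator {0..} t / exp t * ((exp (h n * ln t) - 1) / h n)) \<longlonglongrightarrow> indicator {0..} t / exp t * ln t"
          by (intro tendsto_mult tendsto_const)
        moreover have "s n t = indicator {0..} t / exp t * ((exp (h n * ln t) - 1) / h n)" for n
          using True by (simp add: s_def powr_def)
        ultimately show ?thesis by (simp add: exp_minus field_simps)
      qed
    qed
  qed
  have int_s: "integral\<^sup>L lborel (s n) = (Gamma (1 + h n) - Gamma 1) / h n" for n
  proof -
    have "has_bochner_integral lborel
       (\<lambda>t. (indicator {0..} t * t powr (1 + h n - 1) / exp t - indicator {0..} t * t powr (1 - 1) / exp t) / h n)
       ((Gamma (1 + h n) - Gamma 1) / h n)"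
      using h[of n] by (intro has_bochner_integral_divide_zero has_bochner_integral_diff Gamma_bochner) auto
    moreover have "(\<lambda>t. (indicator {0..} t * t powr (1 + h n - 1) / exp t - indicator {0..} t * t powr (1 - 1) / exp t) / h n)
       = s n"
      by (auto simp: s_def fun_eq_iff field_simps)
    ultimately show ?thesis by (simp add: has_bochner_integral_integral_eq)
  qed
  have "(Gamma has_field_derivative Gamma 1 * Digamma 1) (at (1::real))"
    by (rule has_field_derivative_Gamma) auto
  then have "((\<lambda>y. (Gamma y - Gamma 1) / (y - 1)) \<longlongrightarrow> - euler_mascheroni) (at (1::real))"
    unfolding has_field_derivative_iff by simp
  moreover have "filterlim (\<lambda>n. 1 + h n) (at (1::real)) sequentially"
  proof (rule filterlim_atI)
    have "(\<lambda>n. 1 + h n) \<longlonglongrightarrow> 1 + 0"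
      unfolding h_def by (intro tendsto_add tendsto_const LIMSEQ_inverse_real_of_nat)
    then show "(\<lambda>n. 1 + h n) \<longlonglongrightarrow> 1" by simp
    show "\<forall>\<^sub>F x in sequentially. 1 + h x \<noteq> 1" using h(1)[THEN less_imp_neq] by (intro always_eventually allI) (metis add_cancel_left_right)
  qed
  ultimately have "(\<lambda>n. (Gamma (1 + h n) - Gamma 1) / (1 + h n - 1)) \<longlonglongrightarrow> - euler_mascheroni"
    by (rule filterlim_compose)
  then have "(\<lambda>n. integral\<^sup>L lborel (s n)) \<longlonglongrightarrow> - euler_mascheroni"
    by (simp add: int_s)
  with lim1 show "(\<integral>t. indicator {0..} t * exp (- t) * ln (t::real) \<partial>lborel) = - euler_mascheroni"
    by (rule LIMSEQ_unique)
qed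


lemma integrable_pw: "integrable M f \<Longrightarrow> (\<And>x. f x = g x) \<Longrightarrow> integrable M g"
proof -
  assume "integrable M f" "\<And>x. f x = g x"
  moreover have "f = g" using \<open>\<And>x. f x = g x\<close> by (rule ext)
  ultimately show ?thesis by simp
qed

lemma pow_exp_tendsto: "0 < a \<Longrightarrow> ((\<lambda>x::real. x^k * exp (- a * x)) \<longlongrightarrow> 0) at_top"
proof -
  assume a: "0 < a"
  have "((\<lambda>x::real. x^k / exp x) \<longlongrightarrow> 0) at_top" by (rule tendsto_power_div_exp_0)
  moreover have "filterlim (\<lambda>x::real. a * x) at_top at_top"
    using a by (intro filterlim_tendsto_pos_mult_at_top[OF tendsto_const] filterlim_ident) auto
  ultimately have "((\<lambda>x::real. (a*x)^k / exp (a*x)) \<longlongrightarrow> 0) at_top"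
    by (rule filterlim_compose)
  then have "((\<lambda>x::real. (a*x)^k / exp (a*x) / a^k) \<longlongrightarrow> 0 / a^k) at_top"
    by (intro tendsto_divide tendsto_const) (use a in auto)
  moreover have "(a*x)^k / exp (a*x) / a^k = x^k * exp (- a * x)" for x
    using a by (simp add: power_mult_distrib exp_minus field_simps)
  ultimately show ?thesis by simp
qed

lemma Fsm_tendsto: "0 < a \<Longrightarrow> (Fsm k a \<longlongrightarrow> 1) at_top"
proof -
  assume a: "0 < a"
  have "((\<lambda>x. 1 - (\<Sum>n\<le>k. (a*x)^n * exp (- a * x) / fact n)) \<longlongrightarrow> 1 - (\<Sum>n\<le>k. 0 / fact n)) at_top"
  proof (intro tendsto_diff tendsto_const tendsto_sum tendsto_divide)
    fix n
    have "((\<lambda>x. a^n * (x^n * exp (- a * x))) \<longlongrightarrow> a^n * 0) at_top"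
      by (intro tendsto_mult tendsto_const pow_exp_tendsto a)
    then show "((\<lambda>x. (a*x)^n * exp (- a * x)) \<longlongrightarrow> 0) at_top"
      by (simp add: power_mult_distrib mult.assoc)
  qed auto
  then show ?thesis by (simp add: Fsm_def[abs_def])
qed

lemma ln_pow_exp_tendsto: "0 < a \<Longrightarrow> ((\<lambda>x::real. ln x * (x^s * exp (- a * x))) \<longlongrightarrow> 0) at_top"
proof (rule Lim_null_comparison)
  assume a: "0 < a"
  show "\<forall>\<^sub>F x in at_top. norm (ln x * (x^s * exp (- a * x))) \<le> x^Suc s * exp (- a * x)"
    using eventually_ge_at_top[of "1::real"]
  proof eventually_elim
    case (elim x)
    have "ln x \<le> x" using ln_le_minus_one[of x] elim by linarith
    moreover have "0 \<le> ln x" using elim by simp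
    ultimately show ?case using elim by (simp add: abs_mult mult_right_mono)
  qed
  show "((\<lambda>x. x^Suc s * exp (- a * x)) \<longlongrightarrow> 0) at_top" by (rule pow_exp_tendsto[OF a])
qed

lemma ln_pow_exp_tendsto0: "((\<lambda>x::real. ln x * (x^Suc s * exp (- a * x))) \<longlongrightarrow> 0) (at_right 0)"
proof -
  have "((\<lambda>x::real. (x * ln x) * (x^s * exp (- a * x))) \<longlongrightarrow> 0 * (0^s * exp (- a * 0))) (at_right 0)"
    by (intro tendsto_mult xlnx_tendsto tendsto_power tendsto_exp tendsto_minus tendsto_const tendsto_ident_at)
  then show ?thesis by (simp add: algebra_simps)
qed

lemma Fsm_right0: "(Fsm k a \<longlongrightarrow> 0) (at_right 0)"
proof -
  have "isCont (Fsm k a) 0" by (rule DERIV_isCont[OF DERIV_Fsm])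
  then have "(Fsm k a \<longlongrightarrow> Fsm k a 0) (at 0)" by (simp add: isCont_def)
  then show ?thesis by (auto intro: tendsto_mono[OF at_within_le_at])
qed

lemma V1:
  fixes a :: real and s :: nat
  assumes a: "0 < a" and s: "1 \<le> s"
  shows "(\<integral>x. indicator {0..} x * ln x * ((a * x^s - real s * x^(s-1)) * exp (- a * x)) \<partial>lborel) = fact (s - 1) / a^s"
proof -
  obtain r where r: "s = Suc r" using s by (cases s) auto
  define f where "f x = ln x * ((a * x^s - real s * x^(s-1)) * exp (- a * x))" for x :: real
  define F where "F x = - (ln x * (x^s * exp (- a * x))) + fact r / a^s * Fsm r a x" for x :: real
  have int: "integrable lborel (\<lambda>x. indicator {0..} x * ln x * ((a * x^s - real s * x^(s-1)) * exp (- a * x)))"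
  proof -
    have "integrable lborel (\<lambda>x. a * (indicator {0..} x * x^s * exp (- a * x) * ln x) - real s * (indicator {0..} x * x^(s-1) * exp (- a * x) * ln x))"
      by (rule Bochner_Integration.integrable_diff; rule Bochner_Integration.integrable_mult_right; rule int_pe_ln[OF a])
    then show ?thesis by (rule integrable_pw) (auto simp: algebra_simps)
  qed
  have "(LBINT x=0..\<infinity>. f x) = fact r / a^s - 0"
  proof (rule interval_integral_FTC_integrable[where F=F])
    show "(F has_vector_derivative f x) (at x)" if "0 < ereal x" for x
    proof -
      have x: "0 < x" using that by simp
      have "(F has_real_derivative
         - (1 / x * (x^s * exp (- a * x)) + ln x * (real s * x^(s-1) * exp (- a * x) + x^s * (exp (- a * x) * (- a))))
           + fact r / a^s * dsm r a x) (at x)"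
        unfolding F_def using x
        by (intro derivative_eq_intros DERIV_Fsm refl) (auto intro: DERIV_Fsm)
      moreover have "- (1 / x * (x^s * exp (- a * x)) + ln x * (real s * x^(s-1) * exp (- a * x) + x^s * (exp (- a * x) * (- a))))
           + fact r / a^s * dsm r a x = f x"
        using x a unfolding f_def dsm_def r
        by (simp add: field_simps power_Suc)
      ultimately show ?thesis by (simp add: has_real_derivative_iff_has_vector_derivative)
    qed
    show "isCont f x" if "0 < ereal x" for x
      using that unfolding f_def by (auto intro!: continuous_intros)
    have "set_integrable lborel {0<..} f"
      unfolding set_integrable_def
      by (rule integrable_pw[OF int]) (auto simp: f_def indicator_def)
    moreover have "einterval 0 \<infinity> = {0::real<..}" by (auto simp: einterval_def zero_ereal_def)
    ultimately show "set_integrable lborel (einterval 0 \<infinity>) f" by simp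
    have "((\<lambda>x. - (ln x * (x^Suc r * exp (- a * x))) + fact r / a^s * Fsm r a x) \<longlongrightarrow> - 0 + fact r / a^s * Fsm r a 0) (at_right 0)"
      by (intro tendsto_add tendsto_minus ln_pow_exp_tendsto0 tendsto_mult tendsto_const)
         (auto intro!: Fsm_right0)
    then show "((F \<circ> real_of_ereal) \<longlongrightarrow> 0) (at_right 0)"
      unfolding zero_ereal_def ereal_tendsto_simps by (simp add: F_def[abs_def] r)
    have "((\<lambda>x. - (ln x * (x^s * exp (- a * x))) + fact r / a^s * Fsm r a x) \<longlongrightarrow> - 0 + fact r / a^s * 1) at_top"
      by (intro tendsto_add tendsto_minus ln_pow_exp_tendsto tendsto_mult tendsto_const Fsm_tendsto a)
    then show "((F \<circ> real_of_ereal) \<longlongrightarrow> fact r / a^s) (at_left \<infinity>)"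
      unfolding ereal_tendsto_simps by (simp add: F_def[abs_def])
  qed auto
  moreover have "(LBINT x=0..\<infinity>. f x) = (\<integral>x. indicator {0..} x * ln x * ((a * x^s - real s * x^(s-1)) * exp (- a * x)) \<partial>lborel)"
    unfolding zero_ereal_def interval_integral_to_infinity_eq set_lebesgue_integral_def
    by (intro Bochner_Integration.integral_cong) (auto simp: f_def indicator_def)
  ultimately show ?thesis by (simp add: r)
qed

lemma exp_int1: "has_bochner_integral lborel (\<lambda>x::real. indicator {0..} x * exp (- x)) 1"
proof -
  have e: "(\<integral>\<^sup>+x. ennreal (erlang_density 0 1 x * x^0) \<partial>lborel) = ennreal 1"
    using nn_integral_erlang_ith_moment[of 1 0 0] by simp
  have "has_bochner_integral lborel (\<lambda>x. erlang_density 0 1 x * x^0) 1"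
    by (intro has_bochner_integral_nn_integral e) (auto simp: erlang_density_def)
  moreover have "(\<lambda>x. erlang_density 0 1 x * x^0) = (\<lambda>x::real. indicator {0..} x * exp (- x))"
    by (auto simp: fun_eq_iff erlang_density_def indicator_def)
  ultimately show ?thesis by simp
qed

lemma V0:
  fixes a :: real
  assumes a: "0 < a"
  shows "(\<integral>x. indicator {0..} x * ln x * ((a * x^0 - real 0 * x^(0-1)) * exp (- a * x)) \<partial>lborel) = - euler_mascheroni - ln a"
proof -
  let ?f = "\<lambda>x::real. indicator {0..} x * ln x * ((a * x^0 - real 0 * x^(0-1)) * exp (- a * x))"
  have "integral\<^sup>L lborel ?f = \<bar>1/a\<bar> *\<^sub>R (\<integral>x. ?f (0 + (1/a) * x) \<partial>lborel)"
    using a by (intro lborel_integral_real_affine) auto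
  also have "(\<integral>x. ?f (0 + (1/a) * x) \<partial>lborel)
     = (\<integral>x. a * (indicator {0..} x * exp (- x) * ln x) - a * ln a * (indicator {0..} x * exp (- x)) \<partial>lborel)"
  proof (rule Bochner_Integration.integral_cong_AE)
    show "(\<lambda>x. ?f (0 + (1/a) * x)) \<in> borel_measurable lborel" by measurable
    show "(\<lambda>x::real. a * (indicator {0..} x * exp (- x) * ln x) - a * ln a * (indicator {0..} x * exp (- x))) \<in> borel_measurable lborel"
      by measurable
    show "AE x in lborel. ?f (0 + (1/a) * x) = a * (indicator {0..} x * exp (- x) * ln x) - a * ln a * (indicator {0..} x * exp (- x))"
      using AE_lborel_singleton[of 0]
    proof eventually_elim
      case (elim x)
      show ?case
      proof (cases "0 < x")
        case True
        then show ?thesis using a by (simp add: indicator_def ln_div field_simps)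
      next
        case False
        with elim have "x < 0" by simp
        then show ?thesis using a by (simp add: indicator_def zero_le_divide_iff)
      qed
    qed
  qed
  also have "\<dots> = a * (- euler_mascheroni) - a * ln a * 1"
  proof -
    have i1: "integrable lborel (\<lambda>x::real. indicator {0..} x * exp (- x))" using exp_int1 by (rule integrable.intros)
    have i2: "(\<integral>x. indicator {0..} x * exp (- x) \<partial>lborel) = (1::real)" using exp_int1 by (rule has_bochner_integral_integral_eq)
    show ?thesis using I0 i1 i2 by (subst Bochner_Integration.integral_diff) auto
  qed
  also have "\<bar>1/a\<bar> *\<^sub>R (a * (- euler_mascheroni) - a * ln a * 1) = - euler_mascheroni - ln a"
    using a by (simp add: field_simps)
  finally show ?thesis .
qed


definition Tup :: "nat \<Rightarrow> nat \<Rightarrow> (nat \<Rightarrow> nat) set" where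
  "Tup N m = {k. (\<forall>i>m. k i = 0) \<and> (\<Sum>i\<le>m. k i) = N}"

lemma finite_Tup: "finite (Tup N m)"
proof -
  have "Tup N m \<subseteq> (\<lambda>f i. if i \<le> m then f i else 0) ` ({..m} \<rightarrow>\<^sub>E {..N})"
  proof
    fix k assume k: "k \<in> Tup N m"
    have le: "k i \<le> N" if "i \<le> m" for i
    proof -
      have "k i \<le> (\<Sum>i\<le>m. k i)" using that by (intro member_le_sum) auto
      then show ?thesis using k by (simp add: Tup_def)
    qed
    have "k = (\<lambda>i. if i \<le> m then restrict k {..m} i else 0)"
      using k by (auto simp: Tup_def fun_eq_iff)
    moreover have "restrict k {..m} \<in> {..m} \<rightarrow>\<^sub>E {..N}" using le by auto
    ultimately show "k \<in> (\<lambda>f i. if i \<le> m then f i else 0) ` ({..m} \<rightarrow>\<^sub>E {..N})"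
      by (rule image_eqI)
  qed
  moreover have "finite ((\<lambda>f i. if i \<le> m then f i else 0) ` ({..m} \<rightarrow>\<^sub>E {..N}))"
    by (intro finite_imageI finite_PiE) auto
  ultimately show ?thesis by (rule finite_subset)
qed

lemma Tup_0: "Tup N 0 = {\<lambda>i. if i = 0 then N else 0}"
  by (auto simp: Tup_def fun_eq_iff)

lemma Tup_bij: "bij_betw (\<lambda>k. (k (Suc m), k(Suc m := 0))) (Tup N (Suc m)) (SIGMA j:{..N}. Tup (N - j) m)"
proof (rule bij_betw_byWitness[where f'="\<lambda>(j, k). k(Suc m := j)"])
  show "\<forall>k\<in>Tup N (Suc m). (\<lambda>(j, k). k(Suc m := j)) (k (Suc m), k(Suc m := 0)) = k"
    by auto
  show "\<forall>p\<in>(SIGMA j:{..N}. Tup (N - j) m). (\<lambda>k. (k (Suc m), k(Suc m := 0))) ((\<lambda>(j, k). k(Suc m := j)) p) = p"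
    by (auto simp: Tup_def fun_eq_iff)
  show "(\<lambda>k. (k (Suc m), k(Suc m := 0))) ` Tup N (Suc m) \<subseteq> (SIGMA j:{..N}. Tup (N - j) m)"
  proof clarsimp
    fix k assume k: "k \<in> Tup N (Suc m)"
    have s: "(\<Sum>i\<le>m. k i) + k (Suc m) = N" using k by (simp add: Tup_def)
    have "(\<Sum>i\<le>m. (k(Suc m := 0)) i) = (\<Sum>i\<le>m. k i)" by (intro sum.cong) auto
    then show "k (Suc m) \<le> N \<and> k(Suc m := 0) \<in> Tup (N - k (Suc m)) m"
      using k s by (auto simp: Tup_def)
  qed
  show "(\<lambda>(j, k). k(Suc m := j)) ` (SIGMA j:{..N}. Tup (N - j) m) \<subseteq> Tup N (Suc m)"
  proof clarsimp
    fix j k assume j: "j \<le> N" and k: "k \<in> Tup (N - j) m"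
    have "(\<Sum>i\<le>m. (k(Suc m := j)) i) = (\<Sum>i\<le>m. k i)" by (intro sum.cong) auto
    then show "k(Suc m := j) \<in> Tup N (Suc m)"
      using j k by (auto simp: Tup_def)
  qed
qed

lemma multinomial:
  fixes x :: "nat \<Rightarrow> real"
  shows "(\<Sum>i\<le>m. x i) ^ N = (\<Sum>k\<in>Tup N m. multinom N m k * (\<Prod>i\<le>m. x i ^ k i))"
proof (induction m arbitrary: N)
  case 0
  show ?case by (simp add: Tup_0 multinom_def)
next
  case (Suc m)
  have "(\<Sum>i\<le>Suc m. x i) ^ N = (x (Suc m) + (\<Sum>i\<le>m. x i)) ^ N" by (simp add: add.commute)
  also have "\<dots> = (\<Sum>j\<le>N. of_nat (N choose j) * x (Suc m) ^ j * (\<Sum>i\<le>m. x i) ^ (N - j))"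
    by (rule binomial_ring)
  also have "\<dots> = (\<Sum>j\<le>N. \<Sum>k\<in>Tup (N - j) m. of_nat (N choose j) * x (Suc m) ^ j * (multinom (N - j) m k * (\<Prod>i\<le>m. x i ^ k i)))"
    by (simp add: Suc sum_distrib_left)
  also have "\<dots> = (\<Sum>(j, k)\<in>(SIGMA j:{..N}. Tup (N - j) m). of_nat (N choose j) * x (Suc m) ^ j * (multinom (N - j) m k * (\<Prod>i\<le>m. x i ^ k i)))"
    by (rule sum.Sigma) (auto simp: finite_Tup)
  also have "\<dots> = (\<Sum>k\<in>Tup N (Suc m). (\<lambda>(j, k). of_nat (N choose j) * x (Suc m) ^ j * (multinom (N - j) m k * (\<Prod>i\<le>m. x i ^ k i))) (k (Suc m), k(Suc m := 0)))"
    by (rule sum.reindex_bij_betw[OF Tup_bij, symmetric])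
  also have "\<dots> = (\<Sum>k\<in>Tup N (Suc m). multinom N (Suc m) k * (\<Prod>i\<le>Suc m. x i ^ k i))"
  proof (rule sum.cong[OF refl])
    fix k assume k: "k \<in> Tup N (Suc m)"
    let ?j = "k (Suc m)"
    have s: "(\<Sum>i\<le>m. k i) + ?j = N" using k by (simp add: Tup_def)
    then have jN: "?j \<le> N" by linarith
    have p1: "(\<Prod>i\<le>m. x i ^ (k(Suc m := 0)) i) = (\<Prod>i\<le>m. x i ^ k i)" by (intro prod.cong) auto
    have p2: "(\<Prod>i\<le>m. fact ((k(Suc m := 0)) i) :: real) = (\<Prod>i\<le>m. fact (k i))" by (intro prod.cong) auto
    have nz: "(\<Prod>i\<le>m. fact (k i) :: real) \<noteq> 0" by (simp add: prod_zero_iff)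
    show "(\<lambda>(j, k). of_nat (N choose j) * x (Suc m) ^ j * (multinom (N - j) m k * (\<Prod>i\<le>m. x i ^ k i))) (k (Suc m), k(Suc m := 0))
        = multinom N (Suc m) k * (\<Prod>i\<le>Suc m. x i ^ k i)"
      using jN nz unfolding multinom_def
      by (simp add: p1 p2 binomial_fact field_simps)
  qed
  finally show ?case .
qed


lemma tuples_Tup: "tuples N m = Tup N m - {\<lambda>i. if i = 0 then N else 0}"
proof -
  have "k = (\<lambda>i. if i = 0 then N else 0)" if k: "k \<in> Tup N m" "k 0 = N" for k
  proof -
    have "(\<Sum>i\<le>m. k i) = k 0 + (\<Sum>i\<in>{..m}-{0}. k i)" by (subst sum.remove[of _ 0]) auto
    then have "(\<Sum>i\<in>{..m}-{0}. k i) = 0" using k by (simp add: Tup_def)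
    then have "\<forall>i\<in>{..m}-{0}. k i = 0" by simp
    show ?thesis
    proof (rule ext)
      fix i show "k i = (if i = 0 then N else 0)"
      proof (cases "i = 0")
        case False
        show ?thesis
        proof (cases "i \<le> m")
          case True with False \<open>\<forall>i\<in>{..m}-{0}. k i = 0\<close> show ?thesis by simp
        next
          case False2: False with False k show ?thesis by (simp add: Tup_def)
        qed
      qed (use k in simp)
    qed
  qed
  note * = this
  show ?thesis
  proof (rule set_eqI)
    fix k
    have "k \<in> tuples N m \<longleftrightarrow> k \<in> Tup N m \<and> k 0 \<noteq> N" by (simp add: tuples_def Tup_def)
    moreover have "k \<in> Tup N m \<Longrightarrow> k 0 \<noteq> N \<longleftrightarrow> k \<noteq> (\<lambda>i. if i = 0 then N else 0)"
      using *[of k] by auto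
    ultimately show "k \<in> tuples N m \<longleftrightarrow> k \<in> Tup N m - {\<lambda>i. if i = 0 then N else 0}" by blast
  qed
qed

definition yv :: "real \<Rightarrow> real \<Rightarrow> nat \<Rightarrow> real" where
  "yv b x i = (if i = 0 then 1 else - ((b*x)^(i-1) * exp (- b * x) / fact (i-1)))"

lemma Fsm_yv: "Fsm n b x = (\<Sum>i\<le>Suc n. yv b x i)"
  unfolding Fsm_def by (subst sum.atMost_Suc_shift) (simp add: yv_def sum_negf)

lemma yv_Suc_pow: "yv b x (Suc i) ^ k = (-1)^k * (1 / fact i)^k * (b*x)^(i*k) * exp (- b * x)^k"
proof -
  have "yv b x (Suc i) = (-1) * ((1 / fact i) * (b*x)^i * exp (- b * x))" by (simp add: yv_def)
  then have "yv b x (Suc i) ^ k = (-1)^k * ((1 / fact i)^k * ((b*x)^i)^k * exp (- b * x)^k)"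
    by (simp only: power_mult_distrib)
  then show ?thesis by (simp only: power_mult[symmetric] mult.assoc)
qed

lemma prod_yv:
  assumes k: "k \<in> Tup N (Suc n)"
  shows "(\<Prod>i\<le>Suc n. yv b x i ^ k i) =
    (-1)^(N - k 0) * (\<Prod>\<mu><Suc n. (1 / fact \<mu>) ^ k (\<mu> + 1)) * (b*x)^(wsum (Suc n) k) * exp (- real (N - k 0) * b * x)"
proof -
  have sk: "(\<Sum>i\<le>n. k (Suc i)) = N - k 0"
    using k unfolding Tup_def by (subst (asm) sum.atMost_Suc_shift) auto
  have "(\<Prod>i\<le>Suc n. yv b x i ^ k i) = (\<Prod>i\<le>n. yv b x (Suc i) ^ k (Suc i))"
    by (subst prod.atMost_Suc_shift) (simp add: yv_def)
  also have "\<dots> = (\<Prod>i\<le>n. (-1)^k (Suc i) * (1 / fact i)^k (Suc i) * (b*x)^(i*k (Suc i)) * exp (- b * x)^k (Suc i))"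
    by (simp add: yv_Suc_pow)
  also have "\<dots> = (\<Prod>i\<le>n. (-1::real)^k (Suc i)) * (\<Prod>i\<le>n. (1 / fact i)^k (Suc i)) * (\<Prod>i\<le>n. (b*x)^(i*k (Suc i))) * (\<Prod>i\<le>n. exp (- b * x)^k (Suc i))"
    by (simp add: prod.distrib)
  also have "\<dots> = (-1)^(N - k 0) * (\<Prod>\<mu><Suc n. (1 / fact \<mu>) ^ k (\<mu> + 1)) * (b*x)^(wsum (Suc n) k) * exp (- b * x)^(N - k 0)"
    by (simp add: power_sum[symmetric] sk wsum_def lessThan_Suc_atMost mult.commute)
  also have "exp (- b * x)^(N - k 0) = exp (- real (N - k 0) * b * x)"
    by (subst exp_of_nat_mult[symmetric]) (simp add: mult_ac)
  finally show ?thesis .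
qed

lemma Fsm_pow_expand:
  assumes m: "m = Suc n"
  shows "Fsm n b x ^ N = 1 + (\<Sum>k\<in>tuples N m. multinom N m k *
    ((-1)^(N - k 0) * (\<Prod>\<mu><m. (1 / fact \<mu>) ^ k (\<mu> + 1)) * (b*x)^(wsum m k) * exp (- real (N - k 0) * b * x)))"
proof -
  let ?d = "\<lambda>i::nat. if i = 0 then N else 0"
  let ?t = "\<lambda>k. multinom N m k * (\<Prod>i\<le>m. yv b x i ^ k i)"
  have "Fsm n b x ^ N = (\<Sum>k\<in>Tup N m. ?t k)"
    unfolding Fsm_yv m by (rule multinomial)
  also have "\<dots> = ?t ?d + (\<Sum>k\<in>Tup N m - {?d}. ?t k)"
    by (rule sum.remove[OF finite_Tup]) (simp add: Tup_def)
  also have "?t ?d = 1"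
  proof -
    have "(\<Prod>i\<le>m. yv b x i ^ ?d i) = 1" by (intro prod.neutral) (auto simp: yv_def)
    moreover have "(\<Prod>i\<le>m. fact (?d i) :: real) = fact N"
      by (subst prod.remove[of _ 0]) (auto intro!: prod.neutral)
    ultimately show ?thesis by (simp add: multinom_def)
  qed
  also have "(\<Sum>k\<in>Tup N m - {?d}. ?t k) = (\<Sum>k\<in>tuples N m. multinom N m k *
    ((-1)^(N - k 0) * (\<Prod>\<mu><m. (1 / fact \<mu>) ^ k (\<mu> + 1)) * (b*x)^(wsum m k) * exp (- real (N - k 0) * b * x)))"
    unfolding tuples_Tup
  proof (rule sum.cong[OF refl])
    fix k assume "k \<in> Tup N m - {?d}"
    then have k: "k \<in> Tup N (Suc n)" using m by simp
    show "?t k = multinom N m k *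
    ((-1)^(N - k 0) * (\<Prod>\<mu><m. (1 / fact \<mu>) ^ k (\<mu> + 1)) * (b*x)^(wsum m k) * exp (- real (N - k 0) * b * x))"
      using prod_yv[OF k, of b x] by (simp only: m)
  qed
  finally show ?thesis .
qed


locale chs =
  fixes Nr Nd msr mrd :: nat and \<Omega>sr \<Omega>rd a2 :: real
  assumes Nr: "Nr > 0" and Nd: "Nd > 0" and msr: "msr > 0" and mrd: "mrd > 0"
    and Osr: "\<Omega>sr > 0" and Ord: "\<Omega>rd > 0" and a2: "0 < a2"
begin

definition "b1 = real msr / \<Omega>sr"
definition "b2 = real mrd / \<Omega>rd"
definition "K1 = msr - 1"
definition "K2 = mrd - 1"

definition coefS :: "(nat \<Rightarrow> nat) \<Rightarrow> (nat \<Rightarrow> nat) \<Rightarrow> real" where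
  "coefS k q = multinom Nr msr k * multinom Nd mrd q * (-1) ^ (Nr - k 0 + (Nd - q 0))
       * (\<Prod>\<mu><msr. (1 / fact \<mu>) ^ k (\<mu> + 1)) * (real msr / (a2 * \<Omega>sr)) ^ wsum msr k
       * (\<Prod>\<epsilon><mrd. (1 / fact \<epsilon>) ^ q (\<epsilon> + 1)) * (real mrd / \<Omega>rd) ^ wsum mrd q"

definition alphaS :: "(nat \<Rightarrow> nat) \<Rightarrow> (nat \<Rightarrow> nat) \<Rightarrow> real" where
  "alphaS k q = (real Nr - real (k 0)) * real msr / (a2 * \<Omega>sr) + (real Nd - real (q 0)) * real mrd / \<Omega>rd"

definition sS :: "(nat \<Rightarrow> nat) \<Rightarrow> (nat \<Rightarrow> nat) \<Rightarrow> nat" where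
  "sS k q = wsum msr k + wsum mrd q"

definition S :: "real \<Rightarrow> real" where
  "S x = (1 - Fsm K1 b1 (x / a2) ^ Nr) * (1 - Fsm K2 b2 x ^ Nd)"

definition Ssum :: "real \<Rightarrow> real" where
  "Ssum x = (\<Sum>k\<in>tuples Nr msr. \<Sum>q\<in>tuples Nd mrd. coefS k q * (x ^ sS k q * exp (- alphaS k q * x)))"

definition fprod :: "real \<Rightarrow> real" where
  "fprod x = (real Nr * Fsm K1 b1 (x/a2) ^ (Nr - 1) * (dsm K1 b1 (x/a2) / a2)) * (1 - Fsm K2 b2 x ^ Nd)
     + (1 - Fsm K1 b1 (x/a2) ^ Nr) * (real Nd * Fsm K2 b2 x ^ (Nd - 1) * dsm K2 b2 x)"

definition fsum :: "real \<Rightarrow> real" where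
  "fsum x = (\<Sum>k\<in>tuples Nr msr. \<Sum>q\<in>tuples Nd mrd. coefS k q *
      ((alphaS k q * x ^ sS k q - real (sS k q) * x ^ (sS k q - 1)) * exp (- alphaS k q * x)))"

lemma finite_tuples: "finite (tuples N m)"
  using finite_Tup[of N m] by (simp add: tuples_Tup)

lemma tuples_le: "k \<in> tuples N m \<Longrightarrow> k 0 \<le> N"
proof -
  assume k: "k \<in> tuples N m"
  have "k 0 \<le> (\<Sum>i\<le>m. k i)" by (intro member_le_sum) auto
  then show ?thesis using k by (simp add: tuples_def)
qed

lemma tuples_lt: "k \<in> tuples N m \<Longrightarrow> k 0 < N"
  using tuples_le[of k N m] by (auto simp: tuples_def)

lemma alphaS_pos: "k \<in> tuples Nr msr \<Longrightarrow> q \<in> tuples Nd mrd \<Longrightarrow> 0 < alphaS k q"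
proof -
  assume k: "k \<in> tuples Nr msr" and q: "q \<in> tuples Nd mrd"
  have "0 < (real Nr - real (k 0)) * real msr / (a2 * \<Omega>sr)"
    using tuples_lt[OF k] msr a2 Osr by (intro divide_pos_pos mult_pos_pos) auto
  moreover have "0 < (real Nd - real (q 0)) * real mrd / \<Omega>rd"
    using tuples_lt[OF q] mrd Ord by (intro divide_pos_pos mult_pos_pos) auto
  ultimately show ?thesis by (simp add: alphaS_def)
qed

lemma one_minus_pow:
  assumes m: "m > 0" and b: "0 < b"
  shows "1 - Fsm (m - 1) b x ^ N = - (\<Sum>k\<in>tuples N m. multinom N m k *
    ((-1)^(N - k 0) * (\<Prod>\<mu><m. (1 / fact \<mu>) ^ k (\<mu> + 1)) * (b*x)^(wsum m k) * exp (- real (N - k 0) * b * x)))"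
  using Fsm_pow_expand[of m "m - 1" b x N] m by simp

lemma S_eq: "S x = Ssum x"
proof -
  have b1: "0 < b1" using msr Osr by (simp add: b1_def)
  have b2: "0 < b2" using mrd Ord by (simp add: b2_def)
  have "S x = (\<Sum>k\<in>tuples Nr msr. multinom Nr msr k *
    ((-1)^(Nr - k 0) * (\<Prod>\<mu><msr. (1 / fact \<mu>) ^ k (\<mu> + 1)) * (b1*(x/a2))^(wsum msr k) * exp (- real (Nr - k 0) * b1 * (x/a2))))
    * (\<Sum>q\<in>tuples Nd mrd. multinom Nd mrd q *
    ((-1)^(Nd - q 0) * (\<Prod>\<mu><mrd. (1 / fact \<mu>) ^ q (\<mu> + 1)) * (b2*x)^(wsum mrd q) * exp (- real (Nd - q 0) * b2 * x)))"
    unfolding S_def K1_def K2_def one_minus_pow[OF msr b1] one_minus_pow[OF mrd b2] by simp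
  also have "\<dots> = Ssum x"
    unfolding Ssum_def sum_product
  proof (intro sum.cong refl)
    fix k q assume k: "k \<in> tuples Nr msr" and q: "q \<in> tuples Nd mrd"
    have k0: "real (Nr - k 0) = real Nr - real (k 0)" using tuples_le[OF k] by simp
    have q0: "real (Nd - q 0) = real Nd - real (q 0)" using tuples_le[OF q] by simp
    have e: "exp (- real (Nr - k 0) * b1 * (x/a2)) * exp (- real (Nd - q 0) * b2 * x) = exp (- alphaS k q * x)"
      unfolding exp_add[symmetric] alphaS_def k0 q0 b1_def b2_def using Osr Ord a2 by (simp add: field_simps)
    have p: "(b1*(x/a2))^(wsum msr k) * (b2*x)^(wsum mrd q) = (real msr / (a2 * \<Omega>sr)) ^ wsum msr k * (real mrd / \<Omega>rd) ^ wsum mrd q * x ^ sS k q"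
      unfolding sS_def b1_def b2_def power_add by (simp add: power_mult_distrib field_simps)
    show "multinom Nr msr k *
    ((-1)^(Nr - k 0) * (\<Prod>\<mu><msr. (1 / fact \<mu>) ^ k (\<mu> + 1)) * (b1*(x/a2))^(wsum msr k) * exp (- real (Nr - k 0) * b1 * (x/a2)))
     * (multinom Nd mrd q *
    ((-1)^(Nd - q 0) * (\<Prod>\<mu><mrd. (1 / fact \<mu>) ^ q (\<mu> + 1)) * (b2*x)^(wsum mrd q) * exp (- real (Nd - q 0) * b2 * x)))
     = coefS k q * (x ^ sS k q * exp (- alphaS k q * x))"
      unfolding coefS_def power_add e[symmetric]
      using p by (simp add: ac_simps)
  qed
  finally show ?thesis .
qed

end


context chs begin

lemma DERIV_Fsm_a2: "DERIV (\<lambda>x. Fsm K1 b1 (x / a2)) x :> dsm K1 b1 (x / a2) * (1 / a2)"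
  by (rule DERIV_chain2[OF DERIV_Fsm]) (use a2 in \<open>auto intro!: derivative_eq_intros\<close>)

lemma DERIV_S: "DERIV S x :> - fprod x"
proof -
  have "DERIV S x :>
     (0 - of_nat Nr * (dsm K1 b1 (x / a2) * (1 / a2) * Fsm K1 b1 (x / a2) ^ (Nr - Suc 0))) * (1 - Fsm K2 b2 x ^ Nd)
     + (1 - Fsm K1 b1 (x / a2) ^ Nr) * (0 - of_nat Nd * (dsm K2 b2 x * Fsm K2 b2 x ^ (Nd - Suc 0)))"
  proof -
    have d1: "DERIV (\<lambda>x. 1 - Fsm K1 b1 (x/a2) ^ Nr) x :> 0 - of_nat Nr * (dsm K1 b1 (x / a2) * (1 / a2) * Fsm K1 b1 (x / a2) ^ (Nr - Suc 0))"
      by (rule DERIV_diff[OF DERIV_const DERIV_power[OF DERIV_Fsm_a2]])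
    have d2: "DERIV (\<lambda>x. 1 - Fsm K2 b2 x ^ Nd) x :> 0 - of_nat Nd * (dsm K2 b2 x * Fsm K2 b2 x ^ (Nd - Suc 0))"
      by (rule DERIV_diff[OF DERIV_const DERIV_power[OF DERIV_Fsm]])
    show ?thesis unfolding S_def[abs_def] using DERIV_mult[OF d1 d2] by (simp add: algebra_simps)
  qed
  moreover have "(0 - of_nat Nr * (dsm K1 b1 (x / a2) * (1 / a2) * Fsm K1 b1 (x / a2) ^ (Nr - Suc 0))) * (1 - Fsm K2 b2 x ^ Nd)
     + (1 - Fsm K1 b1 (x / a2) ^ Nr) * (0 - of_nat Nd * (dsm K2 b2 x * Fsm K2 b2 x ^ (Nd - Suc 0))) = - fprod x"
    unfolding fprod_def by (simp add: algebra_simps)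
  ultimately show ?thesis by simp
qed

lemma DERIV_Ssum: "DERIV Ssum x :> - fsum x"
proof -
  have t: "DERIV (\<lambda>x. c * (x^s * exp (- a * x))) x :> c * ((real s * x^(s-1) - a * x^s) * exp (- a * x))"
    for c a :: real and s :: nat
    by (auto intro!: derivative_eq_intros simp: algebra_simps)
  have "DERIV Ssum x :> (\<Sum>k\<in>tuples Nr msr. \<Sum>q\<in>tuples Nd mrd. coefS k q *
      ((real (sS k q) * x^(sS k q - 1) - alphaS k q * x^sS k q) * exp (- alphaS k q * x)))"
    unfolding Ssum_def[abs_def]
    by (intro DERIV_sum t)
  moreover have "(\<Sum>k\<in>tuples Nr msr. \<Sum>q\<in>tuples Nd mrd. coefS k q *
      ((real (sS k q) * x^(sS k q - 1) - alphaS k q * x^sS k q) * exp (- alphaS k q * x))) = - fsum x"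
    unfolding fsum_def sum_negf[symmetric]
    by (intro sum.cong refl) (simp add: algebra_simps)
  ultimately show ?thesis by simp
qed

lemma fsum_eq: "fsum x = fprod x"
proof -
  have "S = Ssum" using S_eq by (rule ext)
  then have "DERIV Ssum x :> - fprod x" using DERIV_S by simp
  from DERIV_unique[OF DERIV_Ssum this] show ?thesis by simp
qed

lemma fprod_nonneg: "0 \<le> x \<Longrightarrow> 0 \<le> fprod x"
proof -
  assume x: "0 \<le> x"
  have b1: "0 < b1" using msr Osr by (simp add: b1_def)
  have b2: "0 < b2" using mrd Ord by (simp add: b2_def)
  have xa: "0 \<le> x / a2" using x a2 by simp
  have f1: "0 \<le> Fsm K1 b1 (x/a2)" "Fsm K1 b1 (x/a2) \<le> 1" using Fsm_ge0[OF b1 xa] Fsm_le1[OF _ xa] b1 by auto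
  have f2: "0 \<le> Fsm K2 b2 x" "Fsm K2 b2 x \<le> 1" using Fsm_ge0[OF b2 x] Fsm_le1[OF _ x] b2 by auto
  have p1: "Fsm K1 b1 (x/a2) ^ Nr \<le> 1" using f1 by (intro power_le_one) auto
  have p2: "Fsm K2 b2 x ^ Nd \<le> 1" using f2 by (intro power_le_one) auto
  have d1: "0 \<le> dsm K1 b1 (x/a2)" using dsm_ge0[OF _ xa] b1 by simp
  have d2: "0 \<le> dsm K2 b2 x" using dsm_ge0[OF _ x] b2 by simp
  show ?thesis unfolding fprod_def
    using f1 f2 p1 p2 d1 d2 a2 by (intro add_nonneg_nonneg mult_nonneg_nonneg) auto
qed

lemma fsum_nonneg: "0 \<le> x \<Longrightarrow> 0 \<le> fsum x"
  using fprod_nonneg fsum_eq by simp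

lemma Ssum_0: "Ssum 0 = 1"
  using S_eq[of 0] Nr Nd by (simp add: S_def zero_power)

lemma DERIV_negSsum: "DERIV (\<lambda>x. - Ssum x) x :> fsum x"
  using DERIV_minus[OF DERIV_Ssum] by simp

end


lemma Vfull:
  fixes a :: real and s :: nat
  assumes a: "0 < a"
  shows "(\<integral>x. indicator {0..} x * ln x * ((a * x^s - real s * x^(s-1)) * exp (- a * x)) \<partial>lborel)
    = 1 / a ^ s * (Gamma (real s + 1) * (Digamma (real s + 1) - ln a)
          - (if s = 0 then 0 else real s * Gamma (real s) * (Digamma (real s) - ln a)))"
proof (cases "s = 0")
  case True
  then show ?thesis using V0[OF a] by simp
next
  case False
  then have s: "1 \<le> s" by simp
  have g1: "Gamma (real s + 1) = real s * Gamma (real s)"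
    using s by (subst Gamma_plus1) (auto simp: nonpos_Ints_def)
  have d1: "Digamma (real s + 1) = Digamma (real s) + 1 / real s"
    using s by (subst Digamma_plus1) auto
  have g2: "Gamma (real s) = fact (s - 1)"
    using Gamma_fact[of "s - 1"] s by (simp add: of_nat_diff)
  have br: "Gamma (real s + 1) * (Digamma (real s + 1) - ln a) - real s * Gamma (real s) * (Digamma (real s) - ln a) = fact (s - 1)"
    unfolding g1 d1 g2 using s by (simp add: field_simps)
  show ?thesis
    using V1[OF a s] False br by simp
qed

lemma integral_double_sum:
  fixes f :: "'i \<Rightarrow> 'j \<Rightarrow> real \<Rightarrow> real"
  assumes A: "finite A" and B: "finite B" and int: "\<And>k q. k \<in> A \<Longrightarrow> q \<in> B \<Longrightarrow> integrable lborel (f k q)"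
  shows "(\<integral>x. (\<Sum>k\<in>A. \<Sum>q\<in>B. c k q * f k q x) \<partial>lborel) = (\<Sum>k\<in>A. \<Sum>q\<in>B. c k q * (\<integral>x. f k q x \<partial>lborel))"
proof -
  have "(\<integral>x. (\<Sum>k\<in>A. \<Sum>q\<in>B. c k q * f k q x) \<partial>lborel) = (\<Sum>k\<in>A. (\<integral>x. (\<Sum>q\<in>B. c k q * f k q x) \<partial>lborel))"
    using int by (intro Bochner_Integration.integral_sum Bochner_Integration.integrable_sum Bochner_Integration.integrable_mult_right) auto
  also have "\<dots> = (\<Sum>k\<in>A. \<Sum>q\<in>B. (\<integral>x. c k q * f k q x \<partial>lborel))"
    using int by (intro sum.cong refl Bochner_Integration.integral_sum Bochner_Integration.integrable_mult_right) auto
  also have "\<dots> = (\<Sum>k\<in>A. \<Sum>q\<in>B. c k q * (\<integral>x. f k q x \<partial>lborel))"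
    by simp
  finally show ?thesis .
qed

lemma term_int:
  fixes a :: real and s :: nat and g :: "real \<Rightarrow> real"
  assumes "\<And>p. integrable lborel (\<lambda>x. indicator {0..} x * x^p * exp (- a * x) * g x)"
  shows "integrable lborel (\<lambda>x. indicator {0..} x * ((a * x^s - real s * x^(s-1)) * exp (- a * x)) * g x)"
proof -
  have "integrable lborel (\<lambda>x. a * (indicator {0..} x * x^s * exp (- a * x) * g x) - real s * (indicator {0..} x * x^(s-1) * exp (- a * x) * g x))"
    by (rule Bochner_Integration.integrable_diff; rule Bochner_Integration.integrable_mult_right; rule assms)
  then show ?thesis by (rule integrable_pw) (simp add: algebra_simps)
qed

lemma int_pe_x: "0 < a \<Longrightarrow> integrable lborel (\<lambda>x::real. indicator {0..} x * x^p * exp (- a * x) * x)"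
proof -
  assume a: "0 < a"
  have e: "indicator {0..} x * x^Suc p * exp (- a * x) = indicator {0..} x * x^p * exp (- a * x) * x" for x :: real
    by (simp only: power_Suc2) (simp only: mult.assoc mult.commute[of x])
  show ?thesis using int_pe[OF a, of "Suc p"] by (rule integrable_pw) (rule e)
qed

lemma int_pe_1: "0 < a \<Longrightarrow> integrable lborel (\<lambda>x::real. indicator {0..} x * x^p * exp (- a * x) * 1)"
  using int_pe[of a p] by simp

context chs begin

definition f0 :: "real \<Rightarrow> real" where "f0 x = indicator {0..} x * fsum x"

lemma f0_nonneg: "0 \<le> f0 x"
  using fsum_nonneg[of x] by (simp add: f0_def indicator_def)

lemma f0_measurable[measurable]: "f0 \<in> borel_measurable borel"
  unfolding f0_def[abs_def] fsum_def by measurable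

lemma f0_times:
  "f0 x * g x = (\<Sum>k\<in>tuples Nr msr. \<Sum>q\<in>tuples Nd mrd. coefS k q *
      (indicator {0..} x * ((alphaS k q * x ^ sS k q - real (sS k q) * x ^ (sS k q - 1)) * exp (- alphaS k q * x)) * g x))"
  unfolding f0_def fsum_def sum_distrib_left sum_distrib_right by (intro sum.cong refl) (simp add: ac_simps)

lemma f0_times_int:
  assumes "\<And>a p. 0 < a \<Longrightarrow> integrable lborel (\<lambda>x. indicator {0..} x * x^p * exp (- a * x) * g x)"
  shows "integrable lborel (\<lambda>x. f0 x * g x)"
  unfolding f0_times
  by (intro Bochner_Integration.integrable_sum Bochner_Integration.integrable_mult_right term_int assms alphaS_pos) auto

lemma int_f0_ln: "integrable lborel (\<lambda>x. f0 x * ln x)"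
  by (rule f0_times_int) (rule int_pe_ln)

lemma int_f0_x: "integrable lborel (\<lambda>x. f0 x * x)"
  by (rule f0_times_int) (rule int_pe_x)

lemma int_f0: "integrable lborel f0"
  using f0_times_int[of "\<lambda>_. 1"] int_pe_1 by simp

lemma f0_ln_value: "(\<integral>x. f0 x * ln x \<partial>lborel) = (\<Sum>k\<in>tuples Nr msr. \<Sum>q\<in>tuples Nd mrd. coefS k q *
   (1 / alphaS k q ^ sS k q * (Gamma (real (sS k q) + 1) * (Digamma (real (sS k q) + 1) - ln (alphaS k q))
          - (if sS k q = 0 then 0 else real (sS k q) * Gamma (real (sS k q)) * (Digamma (real (sS k q)) - ln (alphaS k q))))))"
proof -
  have "(\<integral>x. f0 x * ln x \<partial>lborel) = (\<Sum>k\<in>tuples Nr msr. \<Sum>q\<in>tuples Nd mrd. coefS k q *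
      (\<integral>x. indicator {0..} x * ((alphaS k q * x ^ sS k q - real (sS k q) * x ^ (sS k q - 1)) * exp (- alphaS k q * x)) * ln x \<partial>lborel))"
    unfolding f0_times
    by (rule integral_double_sum[OF finite_tuples finite_tuples]) (rule term_int, rule int_pe_ln, erule (1) alphaS_pos)
  also have "\<dots> = (\<Sum>k\<in>tuples Nr msr. \<Sum>q\<in>tuples Nd mrd. coefS k q *
   (1 / alphaS k q ^ sS k q * (Gamma (real (sS k q) + 1) * (Digamma (real (sS k q) + 1) - ln (alphaS k q))
          - (if sS k q = 0 then 0 else real (sS k q) * Gamma (real (sS k q)) * (Digamma (real (sS k q)) - ln (alphaS k q))))))"
  proof (intro sum.cong refl)
    fix k q assume k: "k \<in> tuples Nr msr" and q: "q \<in> tuples Nd mrd"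
    show "coefS k q * (\<integral>x. indicator {0..} x * ((alphaS k q * x ^ sS k q - real (sS k q) * x ^ (sS k q - 1)) * exp (- alphaS k q * x)) * ln x \<partial>lborel)
      = coefS k q * (1 / alphaS k q ^ sS k q * (Gamma (real (sS k q) + 1) * (Digamma (real (sS k q) + 1) - ln (alphaS k q))
          - (if sS k q = 0 then 0 else real (sS k q) * Gamma (real (sS k q)) * (Digamma (real (sS k q)) - ln (alphaS k q)))))"
      using Vfull[OF alphaS_pos[OF k q], of "sS k q"] by (simp add: ac_simps)
  qed
  finally show ?thesis .
qed

lemma limit_const_eq: "limit_const Nr Nd msr mrd \<Omega>sr \<Omega>rd a2 = 1 / (2 * ln 2) * (\<integral>x. f0 x * ln x \<partial>lborel)"
  unfolding f0_ln_value limit_const_def Let_def coefS_def alphaS_def sS_def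
  by (simp add: mult.assoc)

end


context chs begin

lemma fsum_measurable[measurable]: "fsum \<in> borel_measurable borel"
  unfolding fsum_def by measurable

lemma f0_cdf: "(\<integral>\<^sup>+x. ennreal (f0 x * indicator {..a} x) \<partial>lborel) = ennreal (if 0 \<le> a then 1 - Ssum a else 0)"
proof (cases "0 \<le> a")
  case True
  have "(\<integral>\<^sup>+x. ennreal (f0 x * indicator {..a} x) \<partial>lborel) = (\<integral>\<^sup>+x. ennreal (fsum x) * indicator {0..a} x \<partial>lborel)"
    by (intro nn_integral_cong) (auto simp: f0_def indicator_def)
  also have "\<dots> = ennreal (- Ssum a - - Ssum 0)"
    by (rule nn_integral_FTC_Icc[where F="\<lambda>x. - Ssum x"]) (auto intro: DERIV_negSsum fsum_nonneg True)
  finally show ?thesis using True by (simp add: Ssum_0)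
next
  case False
  then have "ennreal (f0 x * indicator {..a} x) = 0" for x
    by (auto simp: f0_def indicator_def)
  then show ?thesis using False by simp
qed

end


locale chsP = chs Nr Nd msr mrd \<Omega>sr \<Omega>rd a2 + prob_space M
  for Nr Nd msr mrd :: nat and \<Omega>sr \<Omega>rd a2 :: real and M :: "'a measure" +
  fixes Gsr Gsd Grd :: "nat \<Rightarrow> 'a \<Rightarrow> real" and msd :: nat and \<Omega>sd :: real
  assumes msd: "msd > 0" and Osd: "\<Omega>sd > 0"
  assumes indep: "indep_vars (\<lambda>_. borel)
          (\<lambda>j. case j of Inl i \<Rightarrow> Gsr i | Inr (Inl i) \<Rightarrow> Gsd i | Inr (Inr i) \<Rightarrow> Grd i)
          (Inl ` {1..Nr} \<union> Inr ` (Inl ` {1..Nd} \<union> Inr ` {1..Nd}))"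
    and dsr: "\<And>i. i \<in> {1..Nr} \<Longrightarrow>
          distributed M lborel (Gsr i) (\<lambda>x. ennreal (gamma_pdf msr \<Omega>sr x))"
    and dsd: "\<And>j. j \<in> {1..Nd} \<Longrightarrow>
          distributed M lborel (Gsd j) (\<lambda>x. ennreal (gamma_pdf msd \<Omega>sd x))"
    and drd: "\<And>k. k \<in> {1..Nd} \<Longrightarrow>
          distributed M lborel (Grd k) (\<lambda>x. ennreal (gamma_pdf mrd \<Omega>rd x))"
begin

definition "Xv = (\<lambda>j. case j of Inl i \<Rightarrow> Gsr i | Inr (Inl i) \<Rightarrow> Gsd i | Inr (Inr i) \<Rightarrow> Grd i)"
definition "Iset = Inl ` {1..Nr} \<union> Inr ` (Inl ` {1..Nd} \<union> Inr ` {1..Nd})"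
definition "gsr = (\<lambda>\<omega>. Max ((\<lambda>i. Gsr i \<omega>) ` {1..Nr}))"
definition "grd = (\<lambda>\<omega>. Max ((\<lambda>k. Grd k \<omega>) ` {1..Nd}))"
definition "Y = (\<lambda>\<omega>. min (a2 * gsr \<omega>) (grd \<omega>))"

lemma gamma_erlang:
  assumes m: "0 < m" and O: "0 < \<Omega>" and x: "x \<noteq> 0"
  shows "gamma_pdf m \<Omega> x = erlang_density (m - 1) (real m / \<Omega>) x"
proof (cases "0 < x")
  case True
  have G: "Gamma (real m) = fact (m - 1)"
    using Gamma_fact[of "m - 1"] m by (simp add: of_nat_diff)
  have "(real m / \<Omega>) ^ Suc (m - 1) = (real m / \<Omega>) ^ m" using m by simp
  then show ?thesis using True unfolding gamma_pdf_def erlang_density_def G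
    by (simp add: field_simps)
next
  case False
  then show ?thesis using x by (simp add: gamma_pdf_def erlang_density_def)
qed

lemma distr_erlang:
  assumes m: "0 < m" and O: "0 < \<Omega>" and D: "distributed M lborel G (\<lambda>x. ennreal (gamma_pdf m \<Omega> x))"
  shows "distributed M lborel G (erlang_density (m - 1) (real m / \<Omega>))"
proof -
  have "distributed M lborel G (\<lambda>x. ennreal (gamma_pdf m \<Omega> x)) \<longleftrightarrow> distributed M lborel G (\<lambda>x. ennreal (erlang_density (m - 1) (real m / \<Omega>) x))"
  proof (rule distributed_cong_density)
    show "AE x in lborel. ennreal (gamma_pdf m \<Omega> x) = ennreal (erlang_density (m - 1) (real m / \<Omega>) x)"
      using AE_lborel_singleton[of 0] by eventually_elim (simp add: gamma_erlang[OF m O])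
    show "(\<lambda>x. ennreal (gamma_pdf m \<Omega> x)) \<in> borel_measurable lborel"
      unfolding gamma_pdf_def by measurable
  qed simp
  with D show ?thesis by simp
qed

lemma Gsr_meas[measurable]: "i \<in> {1..Nr} \<Longrightarrow> Gsr i \<in> borel_measurable M"
  using distributed_measurable[OF dsr] by simp
lemma Grd_meas[measurable]: "i \<in> {1..Nd} \<Longrightarrow> Grd i \<in> borel_measurable M"
  using distributed_measurable[OF drd] by simp
lemma Gsd_meas[measurable]: "i \<in> {1..Nd} \<Longrightarrow> Gsd i \<in> borel_measurable M"
  using distributed_measurable[OF dsd] by simp

lemma gsr_meas[measurable]: "gsr \<in> borel_measurable M"
  unfolding gsr_def by (intro borel_measurable_Max) auto
lemma grd_meas[measurable]: "grd \<in> borel_measurable M"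
  unfolding grd_def by (intro borel_measurable_Max) auto
lemma Y_meas[measurable]: "Y \<in> borel_measurable M"
  unfolding Y_def by measurable

lemma prob_Gsr: "i \<in> {1..Nr} \<Longrightarrow> 0 \<le> x \<Longrightarrow> prob {\<omega> \<in> space M. Gsr i \<omega> \<le> x} = Fsm K1 b1 x"
  using erlang_distributed_le[OF distr_erlang[OF msr Osr dsr], of i x] msr Osr
  by (simp add: K1_def b1_def Fsm_erlang)
lemma prob_Grd: "i \<in> {1..Nd} \<Longrightarrow> 0 \<le> x \<Longrightarrow> prob {\<omega> \<in> space M. Grd i \<omega> \<le> x} = Fsm K2 b2 x"
  using erlang_distributed_le[OF distr_erlang[OF mrd Ord drd], of i x] mrd Ord
  by (simp add: K2_def b2_def Fsm_erlang)

lemma indep_prob: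
  assumes J: "J \<subseteq> Iset" "J \<noteq> {}"
  shows "prob (\<Inter>j\<in>J. {\<omega>\<in>space M. Xv j \<omega> \<le> c j}) = (\<Prod>j\<in>J. prob {\<omega>\<in>space M. Xv j \<omega> \<le> c j})"
proof -
  have I: "indep_sets (\<lambda>i. {Xv i -` A \<inter> space M | A. A \<in> sets borel}) Iset"
    using indep unfolding indep_vars_def2 Xv_def Iset_def by simp
  have fin: "finite Iset" by (simp add: Iset_def)
  have mem: "\<forall>j\<in>J. Xv j -` {..c j} \<inter> space M \<in> {Xv j -` A \<inter> space M | A. A \<in> sets borel}"
  proof
    fix j assume "j \<in> J"
    show "Xv j -` {..c j} \<inter> space M \<in> {Xv j -` A \<inter> space M | A. A \<in> sets borel}"
      by (rule CollectI, rule exI[of _ "{..c j}"]) simp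
  qed
  have "prob (\<Inter>j\<in>J. Xv j -` {..c j} \<inter> space M) = (\<Prod>j\<in>J. prob (Xv j -` {..c j} \<inter> space M))"
    by (rule indep_setsD[OF I J(1) J(2) finite_subset[OF J(1) fin] mem])
  moreover have "\<And>j. Xv j -` {..c j} \<inter> space M = {\<omega>\<in>space M. Xv j \<omega> \<le> c j}" by auto
  ultimately show ?thesis by simp
qed

end


context chsP begin

lemma ev_le: "(f :: 'a \<Rightarrow> real) \<in> borel_measurable M \<Longrightarrow> {\<omega>\<in>space M. f \<omega> \<le> c} \<in> events"
proof -
  assume f: "f \<in> borel_measurable M"
  have "f -` {..c} \<inter> space M \<in> events" by (rule measurable_sets[OF f]) (intro borel_closed closed_atMost)
  moreover have "f -` {..c} \<inter> space M = {\<omega>\<in>space M. f \<omega> \<le> c}" by auto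
  ultimately show ?thesis by simp
qed

lemma INT_Collect: "J \<noteq> {} \<Longrightarrow> (\<Inter>j\<in>J. {\<omega>\<in>A. P j \<omega>}) = {\<omega>\<in>A. \<forall>j\<in>J. P j \<omega>}"
  by blast

lemma gsr_le_iff: "gsr \<omega> \<le> x \<longleftrightarrow> (\<forall>i\<in>{1..Nr}. Gsr i \<omega> \<le> x)"
  unfolding gsr_def using Nr by (subst Max_le_iff) auto
lemma grd_le_iff: "grd \<omega> \<le> x \<longleftrightarrow> (\<forall>i\<in>{1..Nd}. Grd i \<omega> \<le> x)"
  unfolding grd_def using Nd by (subst Max_le_iff) auto

lemma prob_gsr: assumes x: "0 \<le> x" shows "prob {\<omega>\<in>space M. gsr \<omega> \<le> x} = Fsm K1 b1 x ^ Nr"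
proof -
  have "{\<omega>\<in>space M. gsr \<omega> \<le> x} = (\<Inter>j\<in>Inl ` {1..Nr}. {\<omega>\<in>space M. Xv j \<omega> \<le> x})"
    using Nr by (subst INT_Collect) (auto simp: gsr_le_iff Xv_def)
  then have "prob {\<omega>\<in>space M. gsr \<omega> \<le> x} = (\<Prod>j\<in>Inl ` {1..Nr}. prob {\<omega>\<in>space M. Xv j \<omega> \<le> x})"
    using indep_prob[of "Inl ` {1..Nr}" "\<lambda>_. x"] Nr by (simp add: Iset_def image_mono Un_upper1)
  also have "\<dots> = (\<Prod>i\<in>{1..Nr}. prob {\<omega>\<in>space M. Gsr i \<omega> \<le> x})"
    by (subst prod.reindex) (auto simp: Xv_def)
  also have "\<dots> = (\<Prod>i\<in>{1..Nr}. Fsm K1 b1 x)"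
    using x by (intro prod.cong refl prob_Gsr) auto
  finally show ?thesis by simp
qed

lemma prob_grd: assumes x: "0 \<le> x" shows "prob {\<omega>\<in>space M. grd \<omega> \<le> x} = Fsm K2 b2 x ^ Nd"
proof -
  have "{\<omega>\<in>space M. grd \<omega> \<le> x} = (\<Inter>j\<in>Inr ` Inr ` {1..Nd}. {\<omega>\<in>space M. Xv j \<omega> \<le> x})"
    using Nd by (subst INT_Collect) (auto simp: grd_le_iff Xv_def)
  then have "prob {\<omega>\<in>space M. grd \<omega> \<le> x} = (\<Prod>j\<in>Inr ` Inr ` {1..Nd}. prob {\<omega>\<in>space M. Xv j \<omega> \<le> x})"
    using indep_prob[of "Inr ` Inr ` {1..Nd}" "\<lambda>_. x", OF _ ] Nd by (auto simp: Iset_def)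
  also have "\<dots> = (\<Prod>i\<in>{1..Nd}. prob {\<omega>\<in>space M. Grd i \<omega> \<le> x})"
    unfolding image_image by (subst prod.reindex) (auto simp: inj_on_def Xv_def)
  also have "\<dots> = (\<Prod>i\<in>{1..Nd}. Fsm K2 b2 x)"
    using x by (intro prod.cong refl prob_Grd) auto
  finally show ?thesis by simp
qed

lemma prob_both:
  assumes x: "0 \<le> x" and t: "0 \<le> t"
  shows "prob ({\<omega>\<in>space M. gsr \<omega> \<le> x} \<inter> {\<omega>\<in>space M. grd \<omega> \<le> t}) = Fsm K1 b1 x ^ Nr * Fsm K2 b2 t ^ Nd"
proof -
  let ?J = "Inl ` {1..Nr} \<union> Inr ` Inr ` {1..Nd}"
  let ?c = "\<lambda>j. case j of Inl _ \<Rightarrow> x | Inr _ \<Rightarrow> t"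
  have "{\<omega>\<in>space M. gsr \<omega> \<le> x} \<inter> {\<omega>\<in>space M. grd \<omega> \<le> t} = (\<Inter>j\<in>?J. {\<omega>\<in>space M. Xv j \<omega> \<le> ?c j})"
    using Nr Nd by (subst INT_Collect) (auto simp: gsr_le_iff grd_le_iff Xv_def ball_Un)
  then have "prob ({\<omega>\<in>space M. gsr \<omega> \<le> x} \<inter> {\<omega>\<in>space M. grd \<omega> \<le> t}) = (\<Prod>j\<in>?J. prob {\<omega>\<in>space M. Xv j \<omega> \<le> ?c j})"
    using indep_prob[of ?J ?c] Nr by (auto simp: Iset_def)
  also have "\<dots> = (\<Prod>j\<in>Inl ` {1..Nr}. prob {\<omega>\<in>space M. Xv j \<omega> \<le> ?c j}) * (\<Prod>j\<in>Inr ` Inr ` {1..Nd}. prob {\<omega>\<in>space M. Xv j \<omega> \<le> ?c j})"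
    by (rule prod.union_disjoint) auto
  also have "(\<Prod>j\<in>Inl ` {1..Nr}. prob {\<omega>\<in>space M. Xv j \<omega> \<le> ?c j}) = (\<Prod>i\<in>{1..Nr}. prob {\<omega>\<in>space M. Gsr i \<omega> \<le> x})"
    by (subst prod.reindex) (auto simp: Xv_def)
  also have "\<dots> = (\<Prod>i\<in>{1..Nr}. Fsm K1 b1 x)"
    using x by (intro prod.cong refl prob_Gsr) auto
  also have "(\<Prod>j\<in>Inr ` Inr ` {1..Nd}. prob {\<omega>\<in>space M. Xv j \<omega> \<le> ?c j}) = (\<Prod>i\<in>{1..Nd}. prob {\<omega>\<in>space M. Grd i \<omega> \<le> t})"
    unfolding image_image by (subst prod.reindex) (auto simp: inj_on_def Xv_def)
  also have "\<dots> = (\<Prod>i\<in>{1..Nd}. Fsm K2 b2 t)"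
    using t by (intro prod.cong refl prob_Grd) auto
  finally show ?thesis by simp
qed

lemma prob_Y: assumes t: "0 \<le> t" shows "prob {\<omega>\<in>space M. Y \<omega> \<le> t} = 1 - Ssum t"
proof -
  have ta: "0 \<le> t / a2" using t a2 by simp
  have "{\<omega>\<in>space M. Y \<omega> \<le> t} = {\<omega>\<in>space M. gsr \<omega> \<le> t / a2} \<union> {\<omega>\<in>space M. grd \<omega> \<le> t}"
    using a2 by (auto simp: Y_def min_le_iff_disj pos_le_divide_eq mult.commute)
  then have "prob {\<omega>\<in>space M. Y \<omega> \<le> t} = prob {\<omega>\<in>space M. gsr \<omega> \<le> t / a2} + prob {\<omega>\<in>space M. grd \<omega> \<le> t}
      - prob ({\<omega>\<in>space M. gsr \<omega> \<le> t / a2} \<inter> {\<omega>\<in>space M. grd \<omega> \<le> t})"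
    by (simp add: measure_Un3 fmeasurable_eq_sets ev_le)
  also have "\<dots> = 1 - S t"
    using ta t by (simp add: prob_gsr prob_grd prob_both S_def algebra_simps)
  finally show ?thesis by (simp add: S_eq)
qed

lemma prob_Y_neg: assumes t: "t < 0" shows "prob {\<omega>\<in>space M. Y \<omega> \<le> t} = 0"
proof -
  have "prob {\<omega>\<in>space M. Y \<omega> \<le> t} \<le> prob {\<omega>\<in>space M. Y \<omega> \<le> 0}"
    using t by (intro finite_measure_mono) auto
  also have "\<dots> = 0" using prob_Y[of 0] by (simp add: Ssum_0)
  finally show ?thesis using measure_nonneg[of M] by (meson antisym)
qed

lemma Y_distributed: "distributed M lborel Y f0"
proof (rule distributedI_borel_atMost[where g="\<lambda>a. if 0 \<le> a then 1 - Ssum a else 0"])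
  show "AE x in lborel. 0 \<le> f0 x" by (simp add: f0_nonneg)
  show "(\<integral>\<^sup>+x. ennreal (f0 x * indicator {..a} x) \<partial>lborel) = ennreal (if 0 \<le> a then 1 - Ssum a else 0)" for a
    by (rule f0_cdf)
  show "emeasure M {x \<in> space M. Y x \<le> a} = ennreal (if 0 \<le> a then 1 - Ssum a else 0)" for a
    using prob_Y[of a] prob_Y_neg[of a] by (auto simp: emeasure_eq_measure)
qed simp_all

end


lemma ln_shift_bound:
  fixes x r :: real assumes x: "0 < x" and r: "1 \<le> r"
  shows "\<bar>ln (1 / r + x)\<bar> \<le> \<bar>ln x\<bar> + x"
proof -
  have p: "0 < 1 / r" using r by simp
  have l1: "ln x \<le> ln (1 / r + x)" using x p by (subst ln_le_cancel_iff) (auto intro: add_pos_pos)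
  have "ln (1 / r + x) \<le> ln (1 + x)" using x p r by (subst ln_le_cancel_iff) (auto intro: add_pos_pos)
  also have "\<dots> \<le> x" using x by (intro ln_add_one_self_le_self) simp
  finally have l2: "ln (1 / r + x) \<le> x" .
  show ?thesis using l1 l2 x by linarith
qed

context chsP begin

lemma f0_int_1: "(\<integral>x. f0 x \<partial>lborel) = 1"
  using distributed_integral[OF Y_distributed, of "\<lambda>_. 1"] f0_nonneg by (simp add: prob_space)

lemma int_f0_lnshift:
  assumes r: "1 \<le> r"
  shows "integrable lborel (\<lambda>x. f0 x * ln (1 / r + x))"
proof (rule Bochner_Integration.integrable_bound)
  show "integrable lborel (\<lambda>x. \<bar>f0 x * ln x\<bar> + f0 x * x)"
    using int_f0_ln int_f0_x by (intro Bochner_Integration.integrable_add integrable_abs)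
  show "(\<lambda>x. f0 x * ln (1 / r + x)) \<in> borel_measurable lborel" by measurable
  show "AE x in lborel. norm (f0 x * ln (1 / r + x)) \<le> norm (\<bar>f0 x * ln x\<bar> + f0 x * x)"
    using AE_lborel_singleton[of 0]
  proof eventually_elim
    case (elim x)
    show ?case
    proof (cases "0 < x")
      case True
      have "norm (f0 x * ln (1 / r + x)) = f0 x * \<bar>ln (1 / r + x)\<bar>"
        using f0_nonneg[of x] by (simp add: abs_mult)
      also have "\<dots> \<le> f0 x * (\<bar>ln x\<bar> + x)"
        using f0_nonneg[of x] ln_shift_bound[OF True r] by (intro mult_left_mono) auto
      also have "\<dots> = \<bar>f0 x * ln x\<bar> + f0 x * x"
        using f0_nonneg[of x] by (simp add: abs_mult algebra_simps)
      also have "\<dots> \<le> norm (\<bar>f0 x * ln x\<bar> + f0 x * x)" by simp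
      finally show ?thesis .
    next
      case False
      with elim have "x < 0" by simp
      then have "f0 x = 0" by (simp add: f0_def)
      then show ?thesis by simp
    qed
  qed
qed

lemma C2_eq:
  assumes r: "1 \<le> r"
  shows "1/2 * (\<integral>\<omega>. log 2 (1 + r * Y \<omega>) \<partial>M) - 1/2 * log 2 r = 1 / (2 * ln 2) * (\<integral>x. f0 x * ln (1 / r + x) \<partial>lborel)"
proof -
  have "(\<integral>\<omega>. log 2 (1 + r * Y \<omega>) \<partial>M) = (\<integral>x. f0 x * log 2 (1 + r * x) \<partial>lborel)"
    using distributed_integral[OF Y_distributed, of "\<lambda>x. log 2 (1 + r * x)"] f0_nonneg by simp
  also have "\<dots> = (\<integral>x. log 2 r * f0 x + 1 / ln 2 * (f0 x * ln (1 / r + x)) \<partial>lborel)"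
  proof (intro Bochner_Integration.integral_cong refl)
    fix x :: real
    show "f0 x * log 2 (1 + r * x) = log 2 r * f0 x + 1 / ln 2 * (f0 x * ln (1 / r + x))"
    proof (cases "0 \<le> x")
      case True
      have rp: "0 < r" using r by simp
      have "1 + r * x = r * (1 / r + x)" using rp by (simp add: field_simps)
      moreover have "0 < 1 / r + x" using rp True by (simp add: add_pos_nonneg)
      ultimately have "log 2 (1 + r * x) = log 2 r + ln (1 / r + x) / ln 2"
        using rp by (simp add: log_def ln_mult add_divide_distrib)
      then show ?thesis by (simp add: algebra_simps)
    next
      case False
      then show ?thesis by (simp add: f0_def)
    qed
  qed
  also have "\<dots> = log 2 r * 1 + 1 / ln 2 * (\<integral>x. f0 x * ln (1 / r + x) \<partial>lborel)"
    using int_f0 int_f0_lnshift[OF r] by (simp add: f0_int_1)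
  finally show ?thesis by (simp add: algebra_simps)
qed

lemma lnshift_limit:
  "((\<lambda>r. \<integral>x. f0 x * ln (1 / r + x) \<partial>lborel) \<longlongrightarrow> (\<integral>x. f0 x * ln x \<partial>lborel)) at_top"
proof (rule integral_dominated_convergence_at_top[where w="\<lambda>x. \<bar>f0 x * ln x\<bar> + f0 x * x"])
  show "(\<lambda>x. f0 x * ln x) \<in> borel_measurable lborel" by measurable
  show "(\<lambda>x. f0 x * ln (1 / t + x)) \<in> borel_measurable lborel" for t by measurable
  show "integrable lborel (\<lambda>x. \<bar>f0 x * ln x\<bar> + f0 x * x)"
    using int_f0_ln int_f0_x by (intro Bochner_Integration.integrable_add integrable_abs)
  show "AE x in lborel. ((\<lambda>i. f0 x * ln (1 / i + x)) \<longlongrightarrow> f0 x * ln x) at_top"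
    using AE_lborel_singleton[of 0]
  proof eventually_elim
    case (elim x)
    show ?case
    proof (cases "0 < x")
      case True
      have "((\<lambda>i::real. 1 / i) \<longlongrightarrow> 0) at_top"
        by (rule tendsto_divide_0[OF tendsto_const filterlim_at_top_imp_at_infinity[OF filterlim_ident]])
      then have "((\<lambda>i::real. 1 / i + x) \<longlongrightarrow> 0 + x) at_top" by (intro tendsto_add tendsto_const)
      then have "((\<lambda>i::real. ln (1 / i + x)) \<longlongrightarrow> ln (0 + x)) at_top"
        using True by (intro tendsto_ln) auto
      then show ?thesis by (intro tendsto_mult tendsto_const) simp
    next
      case False
      with elim have "x < 0" by simp
      then have "f0 x = 0" by (simp add: f0_def)
      then show ?thesis by simp
    qed
  qed
  show "\<forall>\<^sub>F i in at_top. AE x in lborel. norm (f0 x * ln (1 / i + x)) \<le> \<bar>f0 x * ln x\<bar> + f0 x * x"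
    using eventually_ge_at_top[of "1::real"]
  proof eventually_elim
    case (elim r)
    show ?case
      using AE_lborel_singleton[of 0]
    proof eventually_elim
      case (elim x)
      show ?case
      proof (cases "0 < x")
        case True
        have "norm (f0 x * ln (1 / r + x)) = f0 x * \<bar>ln (1 / r + x)\<bar>"
          using f0_nonneg[of x] by (simp add: abs_mult)
        also have "\<dots> \<le> f0 x * (\<bar>ln x\<bar> + x)"
          using f0_nonneg[of x] ln_shift_bound[OF True \<open>1 \<le> r\<close>] by (intro mult_left_mono) auto
        also have "\<dots> = \<bar>f0 x * ln x\<bar> + f0 x * x"
          using f0_nonneg[of x] by (simp add: abs_mult algebra_simps)
        finally show ?thesis .
      next
        case False
        with elim have "x < 0" by simp
        then have "f0 x = 0" by (simp add: f0_def)
        then show ?thesis by simp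
      qed
    qed
  qed
qed

lemma C2_limit:
  "((\<lambda>r. 1/2 * (\<integral>\<omega>. log 2 (1 + r * Y \<omega>) \<partial>M) - 1/2 * log 2 r) \<longlongrightarrow> limit_const Nr Nd msr mrd \<Omega>sr \<Omega>rd a2) at_top"
proof -
  have "((\<lambda>r. 1 / (2 * ln 2) * (\<integral>x. f0 x * ln (1 / r + x) \<partial>lborel)) \<longlongrightarrow> 1 / (2 * ln 2) * (\<integral>x. f0 x * ln x \<partial>lborel)) at_top"
    by (intro tendsto_mult tendsto_const lnshift_limit)
  then have "((\<lambda>r. 1 / (2 * ln 2) * (\<integral>x. f0 x * ln (1 / r + x) \<partial>lborel)) \<longlongrightarrow> limit_const Nr Nd msr mrd \<Omega>sr \<Omega>rd a2) at_top"
    by (simp add: limit_const_eq)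
  moreover have "\<forall>\<^sub>F r in at_top. 1 / (2 * ln 2) * (\<integral>x. f0 x * ln (1 / r + x) \<partial>lborel)
      = 1/2 * (\<integral>\<omega>. log 2 (1 + r * Y \<omega>) \<partial>M) - 1/2 * log 2 r"
    using eventually_ge_at_top[of "1::real"] by eventually_elim (rule C2_eq[symmetric])
  ultimately show ?thesis by (rule Lim_transform_eventually)
qed

end


lemma (in prob_space) AE_gamma_nonneg:
  assumes D: "distributed M lborel G (\<lambda>x. ennreal (gamma_pdf m \<Omega> x))"
  shows "AE \<omega> in M. 0 \<le> G \<omega>"
proof -
  have "(AE \<omega> in M. 0 \<le> G \<omega>) \<longleftrightarrow> (AE x in lborel. 0 < ennreal (gamma_pdf m \<Omega> x) \<longrightarrow> 0 \<le> x)"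
    by (rule distributed_AE2[OF D]) measurable
  moreover have "AE x in lborel. 0 < ennreal (gamma_pdf m \<Omega> x) \<longrightarrow> 0 \<le> x"
    by (rule AE_I2) (auto simp: gamma_pdf_def)
  ultimately show ?thesis by simp
qed

lemma C1_pointwise:
  fixes a1 a2 r z :: real
  assumes a1: "0 < a1" and a2: "0 < a2" and r: "0 \<le> r" and z: "0 \<le> z"
  shows "0 \<le> log 2 (1 + a1 * r * z / (a2 * r * z + 1))"
    and "log 2 (1 + a1 * r * z / (a2 * r * z + 1)) \<le> log 2 (1 + a1 / a2)"
proof -
  have d: "0 < a2 * r * z + 1" using a2 r z by (simp add: add_nonneg_pos)
  have u0: "0 \<le> a1 * r * z / (a2 * r * z + 1)" using a1 r z d by simp
  have "a1 * r * z * a2 \<le> a1 * (a2 * r * z + 1)" using a1 by (simp add: algebra_simps)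
  then have u1: "a1 * r * z / (a2 * r * z + 1) \<le> a1 / a2"
    using d a2 by (simp add: divide_simps mult.commute)
  show "0 \<le> log 2 (1 + a1 * r * z / (a2 * r * z + 1))" using u0 by simp
  show "log 2 (1 + a1 * r * z / (a2 * r * z + 1)) \<le> log 2 (1 + a1 / a2)"
    using u0 u1 by (subst log_le_cancel_iff) auto
qed

context chsP begin

definition "gsd = (\<lambda>\<omega>. Max ((\<lambda>j. Gsd j \<omega>) ` {1..Nd}))"
definition "X = (\<lambda>\<omega>. min (gsr \<omega>) (gsd \<omega>))"

lemma gsd_meas[measurable]: "gsd \<in> borel_measurable M"
  unfolding gsd_def by (intro borel_measurable_Max) auto
lemma X_meas[measurable]: "X \<in> borel_measurable M"
  unfolding X_def by measurable

lemma X_nonneg: "AE \<omega> in M. 0 \<le> X \<omega>"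
proof -
  have d1: "distributed M lborel (Gsr 1) (\<lambda>x. ennreal (gamma_pdf msr \<Omega>sr x))" using dsr[of 1] Nr by simp
  have d2: "distributed M lborel (Gsd 1) (\<lambda>x. ennreal (gamma_pdf msd \<Omega>sd x))" using dsd[of 1] Nd by simp
  show ?thesis using AE_gamma_nonneg[OF d1] AE_gamma_nonneg[OF d2]
proof eventually_elim
  case (elim \<omega>)
  have "Gsr 1 \<omega> \<le> gsr \<omega>" unfolding gsr_def using Nr by (intro Max_ge) auto
  moreover have "Gsd 1 \<omega> \<le> gsd \<omega>" unfolding gsd_def using Nd by (intro Max_ge) auto
  ultimately show ?case using elim by (simp add: X_def)
qed
qed

lemma C1_bound:
  assumes a1: "0 < a1" and r: "0 \<le> r"
  shows "\<bar>1/2 * (\<integral>\<omega>. log 2 (1 + a1 * r * X \<omega> / (a2 * r * X \<omega> + 1)) \<partial>M)\<bar> \<le> 1/2 * log 2 (1 + a1 / a2)"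
proof -
  let ?g = "\<lambda>\<omega>. log 2 (1 + a1 * r * X \<omega> / (a2 * r * X \<omega> + 1))"
  let ?B = "log 2 (1 + a1 / a2)"
  have ae1: "AE \<omega> in M. 0 \<le> ?g \<omega>" using X_nonneg
    by eventually_elim (rule C1_pointwise(1)[OF a1 a2 r])
  have ae2: "AE \<omega> in M. ?g \<omega> \<le> ?B" using X_nonneg
    by eventually_elim (rule C1_pointwise(2)[OF a1 a2 r])
  have int: "integrable M ?g"
  proof (rule integrable_const_bound[where B="?B"])
    show "AE \<omega> in M. norm (?g \<omega>) \<le> ?B" using ae1 ae2 by eventually_elim simp
  qed measurable
  have "0 \<le> (\<integral>\<omega>. ?g \<omega> \<partial>M)" using ae1 by (rule integral_nonneg_AE)
  moreover have "(\<integral>\<omega>. ?g \<omega> \<partial>M) \<le> (\<integral>\<omega>. ?B \<partial>M)"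
    using int ae2 by (intro integral_mono_AE) auto
  moreover have "(\<integral>\<omega>. ?B \<partial>M) = ?B" by (simp add: prob_space)
  ultimately show ?thesis by (simp add: prob_space)
qed

lemma main_loc:
  assumes a1: "0 < a1"
  shows "((\<lambda>r. 1/2 * (\<integral>\<omega>. log 2 (1 + r * Y \<omega>) \<partial>M) - 1/2 * log 2 r)
            \<longlongrightarrow> limit_const Nr Nd msr mrd \<Omega>sr \<Omega>rd a2) at_top
         \<and> (\<lambda>r. 1/2 * (\<integral>\<omega>. log 2 (1 + a1 * r * X \<omega> / (a2 * r * X \<omega> + 1)) \<partial>M)
               + 1/2 * (\<integral>\<omega>. log 2 (1 + r * Y \<omega>) \<partial>M) - 1/2 * log 2 r) \<in> O[at_top](\<lambda>_. 1)"
proof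
  let ?L = "limit_const Nr Nd msr mrd \<Omega>sr \<Omega>rd a2"
  let ?B = "1/2 * log 2 (1 + a1 / a2)"
  show lim: "((\<lambda>r. 1/2 * (\<integral>\<omega>. log 2 (1 + r * Y \<omega>) \<partial>M) - 1/2 * log 2 r) \<longlongrightarrow> ?L) at_top"
    by (rule C2_limit)
  have ev1: "\<forall>\<^sub>F r in at_top. dist (1/2 * (\<integral>\<omega>. log 2 (1 + r * Y \<omega>) \<partial>M) - 1/2 * log 2 r) ?L < 1"
    using lim by (rule tendstoD) simp
  show "(\<lambda>r. 1/2 * (\<integral>\<omega>. log 2 (1 + a1 * r * X \<omega> / (a2 * r * X \<omega> + 1)) \<partial>M)
               + 1/2 * (\<integral>\<omega>. log 2 (1 + r * Y \<omega>) \<partial>M) - 1/2 * log 2 r) \<in> O[at_top](\<lambda>_. 1)"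
  proof (rule bigoI[where c="?B + \<bar>?L\<bar> + 1"])
    show "\<forall>\<^sub>F r in at_top. norm (1/2 * (\<integral>\<omega>. log 2 (1 + a1 * r * X \<omega> / (a2 * r * X \<omega> + 1)) \<partial>M)
               + 1/2 * (\<integral>\<omega>. log 2 (1 + r * Y \<omega>) \<partial>M) - 1/2 * log 2 r) \<le> (?B + \<bar>?L\<bar> + 1) * norm (1::real)"
      using ev1 eventually_ge_at_top[of "0::real"]
    proof eventually_elim
      case (elim r)
      have c1: "\<bar>1/2 * (\<integral>\<omega>. log 2 (1 + a1 * r * X \<omega> / (a2 * r * X \<omega> + 1)) \<partial>M)\<bar> \<le> ?B"
        using C1_bound[OF a1 elim(2)] .
      have c2: "\<bar>1/2 * (\<integral>\<omega>. log 2 (1 + r * Y \<omega>) \<partial>M) - 1/2 * log 2 r\<bar> \<le> \<bar>?L\<bar> + 1"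
        using elim(1) by (simp add: dist_real_def)
      show ?case using c1 c2 by simp
    qed
  qed
qed

end


theorem mainTheorem6:
  fixes M :: "'a measure"
    and Gsr Gsd Grd :: "nat \<Rightarrow> 'a \<Rightarrow> real"
    and Nr Nd msr msd mrd :: nat
    and \<Omega>sr \<Omega>sd \<Omega>rd a1 a2 :: real
  assumes "prob_space M"
    and "Nr > 0" "Nd > 0" "msr > 0" "msd > 0" "mrd > 0"
    and "\<Omega>sr > 0" "\<Omega>sd > 0" "\<Omega>rd > 0"
    and "0 < a1" "a1 < 1" "0 < a2" "a2 < 1" "a1 + a2 = 1" "a1 > a2"
    and indep: "prob_space.indep_vars M (\<lambda>_. borel)
          (\<lambda>j. case j of Inl i \<Rightarrow> Gsr i | Inr (Inl i) \<Rightarrow> Gsd i | Inr (Inr i) \<Rightarrow> Grd i)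
          (Inl ` {1..Nr} \<union> Inr ` (Inl ` {1..Nd} \<union> Inr ` {1..Nd}))"
    and dsr: "\<And>i. i \<in> {1..Nr} \<Longrightarrow>
          distributed M lborel (Gsr i) (\<lambda>x. ennreal (gamma_pdf msr \<Omega>sr x))"
    and dsd: "\<And>j. j \<in> {1..Nd} \<Longrightarrow>
          distributed M lborel (Gsd j) (\<lambda>x. ennreal (gamma_pdf msd \<Omega>sd x))"
    and drd: "\<And>k. k \<in> {1..Nd} \<Longrightarrow>
          distributed M lborel (Grd k) (\<lambda>x. ennreal (gamma_pdf mrd \<Omega>rd x))"
    and gsr_def: "gsr = (\<lambda>\<omega>. Max ((\<lambda>i. Gsr i \<omega>) ` {1..Nr}))"
    and gsd_def: "gsd = (\<lambda>\<omega>. Max ((\<lambda>j. Gsd j \<omega>) ` {1..Nd}))"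
    and grd_def: "grd = (\<lambda>\<omega>. Max ((\<lambda>k. Grd k \<omega>) ` {1..Nd}))"
    and Y_def: "Y = (\<lambda>\<omega>. min (a2 * gsr \<omega>) (grd \<omega>))"
    and X_def: "X = (\<lambda>\<omega>. min (gsr \<omega>) (gsd \<omega>))"
    and C2_def: "C2 = (\<lambda>\<rho>::real. 1/2 * (\<integral>\<omega>. log 2 (1 + \<rho> * Y \<omega>) \<partial>M))"
    and C1_def: "C1 = (\<lambda>\<rho>::real. 1/2 *
          (\<integral>\<omega>. log 2 (1 + a1 * \<rho> * X \<omega> / (a2 * \<rho> * X \<omega> + 1)) \<partial>M))"
  shows "((\<lambda>\<rho>. C2 \<rho> - 1/2 * log 2 \<rho>)
            \<longlongrightarrow> limit_const Nr Nd msr mrd \<Omega>sr \<Omega>rd a2) at_top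
         \<and> (\<lambda>\<rho>. C1 \<rho> + C2 \<rho> - 1/2 * log 2 \<rho>) \<in> O[at_top](\<lambda>_. 1)"
proof -
  have pa1: "0 < a1" by fact
  have loc: "chsP Nr Nd msr mrd \<Omega>sr \<Omega>rd a2 M Gsr Gsd Grd msd \<Omega>sd"
    using indep by (simp add: chsP_def chsP_axioms_def chs_def assms(1-9,12) dsr dsd drd)
  interpret P: chsP Nr Nd msr mrd \<Omega>sr \<Omega>rd a2 M Gsr Gsd Grd msd \<Omega>sd
    by (rule loc)
  have eY: "Y = P.Y" unfolding Y_def gsr_def grd_def P.Y_def P.gsr_def P.grd_def ..
  have eX: "X = P.X" unfolding X_def gsr_def gsd_def P.X_def P.gsr_def P.gsd_def ..
  show ?thesis
    unfolding C1_def C2_def eY eX using P.main_loc[OF pa1] by simp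
qed


end
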